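(* In the discrete setting described in the context (with fixed integers $\ell,k\ge1$), assume that $(\sigma_{\mathcal{K}},u_{\mathcal{K}},u_{\partial\mathcal{K}})\in\Sigma^{\ell,k}(\mathcal{K})\times\mathcal{P}^{\ell-1}(\mathcal{K})\times\Lambda_{\partial\mathcal{K}}$ solves the discrete hybridized mixed problem (dHM). Let $\tilde u_{\mathcal{K}}$ be the unique element of $V^{\ell,k}_0$ such that, for all $K\in\mathcal{K}$, $\pi^{\ell-1}_K(\tilde u_K)=u_K$ and $\pi^{k-1}_{\mathcal{F}_K}(\tilde u_K|_{\partial K})=u_{\partial K}$. Then $\tilde u_{\mathcal{K}}$ solves the discrete primal problem (dP).
   Context: Let $\Omega\subset\mathbb{R}^d$, $d\in\{2,3\}$, be a bounded connected Lipschitz polytope, $f\in L^2(\Omega)$, and $\mathbb{b}:\Omega\to\mathbb{R}^{d\times d}_{\rm sym}$ measurable with $b_\flat|\xi|^2\le\mathbb{b}(x)\xi\cdot\xi\le b_\sharp|\xi|^2$ a.e., for constants $b_\sharp\ge b_\flat>0$. $(\cdot,\cdot)_X$ is the $L^2(X)$ inner product. Mesh: $\mathcal{K}$ is a finite set of disjoint Lipschitz open $d$-polytopes (cells) with $\bigcup\bar K=\bar\Omega$; $\mathcal{F}$ is a finite set of disjoint connected subsets (faces) of $\partial\mathcal{K}:=\bigcup_K\partial K$ with $\bigcup_F\bar F=\partial\mathcal{K}$, each face $F$ being a Lipschitz relatively open $(d-1)$-polytopal subset of an affine hyperplane, and either an interface ($\bar F\subseteq\partial K^+\cap\partial K^-$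 for two distinct cells) or a boundary face ($\bar F\subseteq\partial K\cap\partial\Omega$ for one cell). $\mathcal{F}_K$ is the set of faces with $\bigcup_{F\in\mathcal{F}_K}\bar F=\partial K$; $n_{\partial K}$ is the outward unit normal, $n_{K,F}=n_{\partial K}|_F$; $n_F:=n_{K^+,F}$ for interfaces and $n_{K,F}$ for boundary faces; $\varepsilon_{K,F}:=n_{K,F}\cdot n_F$. $\mathcal{P}^n(X)$ denotes restrictions to $X$ of $d$-variate polynomials of total degree $\le n$ ($\mathcal{P}^{-1}:=\{0\}$), $\pi^n_X$ the $L^2(X)$-orthogonal projector onto it; $\mathcal{P}^n(\mathcal{F}_K)$, $\mathcal{P}^n(\mathcal{K})$ are the broken (face-wise on $\partial K$, cell-wise on $\Omega$) polynomial spaces with $L^2$-orthogonal projectors $\pi^n_{\mathcal{F}_K}$, $\pi^n_{\mathcal{K}}$. $H^1(\mathcal{K})$, $H(\mathrm{div};\mathcal{K})$ and broken operators $\nabla_{\mathcal{K}},\nabla_{\mathcal{K}}\cdot$ are defined cell-wise. For $v_{\mathcal{K}}\in H^1(\mathcal{K})$, the jump is $[\![v_{\mathcal{K}}]\!]_F:=\sum_{K\in\{K^+,K^-\}}\varepsilon_{K,F}v_K|_F$ on interfaces and $v_K|_F$ on boundary faces; $\tilde H^1_0:=\{v_{\mathcal{K}}\in H^1(\mathcal{K}):\pi^{k-1}_F([\![v_{\mathcal{K}}]\!]_F)=0\ \forall F\in\mathcal{F}\}$. For $K\in\mathcal{K}$: $\Sigma^{\ell,k}(K):=\{\tau\in H(\mathrm{div};K):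 \nabla\times(\mathbb{b}^{-1}\tau)=0,\ \nabla\cdot\tau\in\mathcal{P}^{\ell-1}(K),\ \tau|_{\partial K}\cdot n_{\partial K}\in\mathcal{P}^{k-1}(\mathcal{F}_K)\}$ (for $d=2$ the curl condition reads $\nabla\cdot((\mathbb{b}^{-1}\tau)^\perp)=0$, $z^\perp$ the rotation by $-\pi/2$), and $V^{\ell,k}(K):=\{v\in H^1(K):\nabla\cdot(\mathbb{b}\nabla v)\in\mathcal{P}^{\ell-1}(K),\ (\mathbb{b}\nabla v)|_{\partial K}\cdot n_{\partial K}\in\mathcal{P}^{k-1}(\mathcal{F}_K)\}$. $\Sigma^{\ell,k}(\mathcal{K})$, $V^{\ell,k}(\mathcal{K})$ are the broken spaces with these local spaces; $\Sigma^{\ell,k}_0:=\Sigma^{\ell,k}(\mathcal{K})\cap H(\mathrm{div};\Omega)$ and $V^{\ell,k}_0:=V^{\ell,k}(\mathcal{K})\cap\tilde H^1_0$. Trace space: $\Lambda_{\partial\mathcal{K}}:=\{(v_{\partial K})_K\in\prod_K\mathcal{P}^{k-1}(\mathcal{F}_K):\exists\tilde v_{\mathcal{K}}\in V^{\ell,k}_0,\ v_{\partial K}=\pi^{k-1}_{\mathcal{F}_K}(\tilde v_K|_{\partial K})\ \forall K\}$. Pairing: $\langle\tau_{\partial\mathcal{K}},v_{\partial\mathcal{K}}\rangle_{\partial\mathcal{K}}:=\sum_K(\tau_{\partial K},v_{\partial K})_{\partial K}$, with $\tau_{\mathcal{K}}|_{\partial\mathcal{K}}\cdot n_{\partial\mathcal{K}}:=(\tau_K|_{\partial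 K}\cdot n_{\partial K})_K$. (dHM): find $(\sigma_{\mathcal{K}},u_{\mathcal{K}},u_{\partial\mathcal{K}})\in\Sigma^{\ell,k}(\mathcal{K})\times\mathcal{P}^{\ell-1}(\mathcal{K})\times\Lambda_{\partial\mathcal{K}}$ with $(\mathbb{b}^{-1}\sigma_{\mathcal{K}},\tau_{\mathcal{K}})_\Omega+(u_{\mathcal{K}},\nabla_{\mathcal{K}}\cdot\tau_{\mathcal{K}})_\Omega-\langle\tau_{\mathcal{K}}|_{\partial\mathcal{K}}\cdot n_{\partial\mathcal{K}},u_{\partial\mathcal{K}}\rangle_{\partial\mathcal{K}}=0$ for all $\tau_{\mathcal{K}}\in\Sigma^{\ell,k}(\mathcal{K})$; $-(\nabla_{\mathcal{K}}\cdot\sigma_{\mathcal{K}},v_{\mathcal{K}})_\Omega=(f,v_{\mathcal{K}})_\Omega$ for all $v_{\mathcal{K}}\in\mathcal{P}^{\ell-1}(\mathcal{K})$; and $\langle\sigma_{\mathcal{K}}|_{\partial\mathcal{K}}\cdot n_{\partial\mathcal{K}},v_{\partial\mathcal{K}}\rangle_{\partial\mathcal{K}}=0$ for all $v_{\partial\mathcal{K}}\in\Lambda_{\partial\mathcal{K}}$. (dP): find $\tilde u_{\mathcal{K}}\in V^{\ell,k}_0$ with $(\mathbb{b}\nabla_{\mathcal{K}}\tilde u_{\mathcal{K}},\nabla_{\mathcal{K}}\tilde v_{\mathcal{K}})_\Omega=(f,\pi^{\ell-1}_{\mathcal{K}}(\tilde v_{\mathcal{K}}))_\Omega$ for all $\tilde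 v_{\mathcal{K}}\in V^{\ell,k}_0$. *)

theory Defs
  imports "HOL-Analysis.Analysis"
begin

text \<open>Points of the ambient space are vectors of type real^'n; the dimension is CARD('n).
Broken (cell-wise) functions are families indexed by the cells K of the mesh.\<close>

definition partial :: "(real^'n \<Rightarrow> real) \<Rightarrow> 'n \<Rightarrow> real^'n \<Rightarrow> real" where
  "partial \<phi> i x = frechet_derivative \<phi> (at x) (axis i 1)"

definition grad_c :: "(real^'n \<Rightarrow> real) \<Rightarrow> real^'n \<Rightarrow> real^'n" where
  "grad_c \<phi> x = (\<chi> i. partial \<phi> i x)"

coinductive smooth :: "(real^'n \<Rightarrow> real) \<Rightarrow> bool" where
  "(\<forall>x. \<phi> differentiable (at x)) \<Longrightarrow> (\<forall>i. smooth (partial \<phi> i)) \<Longrightarrow> smooth \<phi>"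

definition test_fun :: "(real^'n) set \<Rightarrow> (real^'n \<Rightarrow> real) \<Rightarrow> bool" where
  "test_fun K \<phi> \<longleftrightarrow> smooth \<phi> \<and> compact (closure {x. \<phi> x \<noteq> 0}) \<and> closure {x. \<phi> x \<noteq> 0} \<subseteq> K"

text \<open>With H = UNIV this is the usual notion of a (bounded) Lipschitz domain.\<close>
definition lipschitz_in :: "(real^'n) set \<Rightarrow> (real^'n) set \<Rightarrow> bool" where
  "lipschitz_in H S \<longleftrightarrow> S \<subseteq> H \<and> openin (top_of_set H) S \<and> bounded S \<and>
     (\<forall>x \<in> closure S - S. \<exists>e r g L. norm e = 1 \<and> (\<forall>y\<in>H. y + e \<in> H) \<and> r > 0 \<and>
        L-lipschitz_on UNIV g \<and> (\<forall>y t. g (y + t *\<^sub>R e) = g y) \<and>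
        S \<inter> ball x r = {y \<in> H \<inter> ball x r. y \<bullet> e < g y})"

definition polytopal :: "(real^'n) set \<Rightarrow> bool" where
  "polytopal S \<longleftrightarrow> (\<exists>P. finite P \<and> (\<forall>Q\<in>P. polytope Q) \<and> closure S = \<Union>P)"

definition lipschitz_polytope :: "(real^'n) set \<Rightarrow> bool" where
  "lipschitz_polytope K \<longleftrightarrow> open K \<and> K \<noteq> {} \<and> lipschitz_in UNIV K \<and> polytopal K"

definition lipschitz_face :: "(real^'n) set \<Rightarrow> bool" where
  "lipschitz_face F \<longleftrightarrow> (\<exists>n c. n \<noteq> 0 \<and> F \<noteq> {} \<and> lipschitz_in {x. n \<bullet> x = c} F \<and> polytopal F)"

definition face_normal :: "(real^'n) set \<Rightarrow> real^'n" where
  "face_normal F = (SOME n. norm n = 1 \<and> (\<exists>c. F \<subseteq> {x. n \<bullet> x = c}))"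

definition face_offset :: "(real^'n) set \<Rightarrow> real" where
  "face_offset F = (SOME c. F \<subseteq> {x. face_normal F \<bullet> x = c})"

text \<open>(d-1)-dimensional Lebesgue (surface) measure on a flat face F: the Lebesgue measure of the
slab {y + t n : y in F, |t| < 1}, pushed forward by the orthogonal projection onto the hyperplane
of F and divided by the slab width 2 (Fubini), then completed.\<close>
definition face_measure :: "(real^'n) set \<Rightarrow> (real^'n) measure" where
  "face_measure F = (let n = face_normal F; c = face_offset F;
      P = (\<lambda>x. x - (x \<bullet> n - c) *\<^sub>R n);
      S = {x. \<bar>x \<bullet> n - c\<bar> < 1 \<and> P x \<in> F}
    in completion (scale_measure (ennreal (1/2)) (distr (lebesgue_on S) lborel P)))"

definition outer_normal :: "(real^'n) set \<Rightarrow> (real^'n) set \<Rightarrow> real^'n" where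
  "outer_normal K F = (THE n. norm n = 1 \<and> (\<exists>c. F \<subseteq> {x. n \<bullet> x = c}) \<and>
      (\<forall>x\<in>F. \<exists>e>0. \<forall>t. 0 < t \<and> t < e \<longrightarrow> x - t *\<^sub>R n \<in> K \<and> x + t *\<^sub>R n \<notin> K))"

definition facesK :: "(real^'n) set set \<Rightarrow> (real^'n) set \<Rightarrow> (real^'n) set set" where
  "facesK \<F> K = {F \<in> \<F>. F \<subseteq> frontier K}"

definition is_interface :: "(real^'n) set set \<Rightarrow> (real^'n) set \<Rightarrow> bool" where
  "is_interface \<K> F \<longleftrightarrow> (\<exists>K1\<in>\<K>. \<exists>K2\<in>\<K>. K1 \<noteq> K2 \<and> closure F \<subseteq> frontier K1 \<inter> frontier K2)"

definition is_boundary_face :: "(real^'n) set \<Rightarrow> (real^'n) set set \<Rightarrow> (real^'n) set \<Rightarrow> bool" where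
  "is_boundary_face \<Omega> \<K> F \<longleftrightarrow> (\<exists>K\<in>\<K>. closure F \<subseteq> frontier K \<inter> frontier \<Omega>)"

definition admissible_mesh ::
  "(real^'n) set \<Rightarrow> (real^'n) set set \<Rightarrow> (real^'n) set set \<Rightarrow> ((real^'n) set \<Rightarrow> real^'n) \<Rightarrow> bool" where
  "admissible_mesh \<Omega> \<K> \<F> nF \<longleftrightarrow>
     (CARD('n) = 2 \<or> CARD('n) = 3) \<and>
     lipschitz_polytope \<Omega> \<and> connected \<Omega> \<and>
     finite \<K> \<and> (\<forall>K\<in>\<K>. lipschitz_polytope K) \<and>
     (\<forall>K1\<in>\<K>. \<forall>K2\<in>\<K>. K1 \<noteq> K2 \<longrightarrow> K1 \<inter> K2 = {}) \<and>
     \<Union>(closure ` \<K>) = closure \<Omega> \<and>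
     finite \<F> \<and> (\<forall>F\<in>\<F>. lipschitz_face F \<and> connected F) \<and>
     (\<forall>F1\<in>\<F>. \<forall>F2\<in>\<F>. F1 \<noteq> F2 \<longrightarrow> F1 \<inter> F2 = {}) \<and>
     \<Union>(closure ` \<F>) = \<Union>(frontier ` \<K>) \<and>
     (\<forall>F\<in>\<F>. is_interface \<K> F \<or> is_boundary_face \<Omega> \<K> F) \<and>
     (\<forall>K\<in>\<K>. \<Union>(closure ` facesK \<F> K) = frontier K) \<and>
     (\<forall>F\<in>\<F>. \<exists>K\<in>\<K>. F \<in> facesK \<F> K \<and> nF F = outer_normal K F)"

definition L2 :: "'a measure \<Rightarrow> ('a \<Rightarrow> real) \<Rightarrow> bool" where
  "L2 M v \<longleftrightarrow> v \<in> borel_measurable M \<and> integrable M (\<lambda>x. (v x)\<^sup>2)"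

definition L2v :: "'a measure \<Rightarrow> ('a \<Rightarrow> real^'n) \<Rightarrow> bool" where
  "L2v M \<tau> \<longleftrightarrow> (\<forall>i. L2 M (\<lambda>x. \<tau> x $ i))"

text \<open>Weak gradient g of v on K (so v in H^1(K) iff such g exists).\<close>
definition weak_grad :: "(real^'n) set \<Rightarrow> (real^'n \<Rightarrow> real) \<Rightarrow> (real^'n \<Rightarrow> real^'n) \<Rightarrow> bool" where
  "weak_grad K v g \<longleftrightarrow> L2 (lebesgue_on K) v \<and> L2v (lebesgue_on K) g \<and>
     (\<forall>\<phi> i. test_fun K \<phi> \<longrightarrow>
        integral\<^sup>L (lebesgue_on K) (\<lambda>x. v x * partial \<phi> i x) = - integral\<^sup>L (lebesgue_on K) (\<lambda>x. g x $ i * \<phi> x))"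

text \<open>Weak divergence q of tau on K (so tau in H(div;K) iff such q exists).\<close>
definition weak_div :: "(real^'n) set \<Rightarrow> (real^'n \<Rightarrow> real^'n) \<Rightarrow> (real^'n \<Rightarrow> real) \<Rightarrow> bool" where
  "weak_div K \<tau> q \<longleftrightarrow> L2v (lebesgue_on K) \<tau> \<and> L2 (lebesgue_on K) q \<and>
     (\<forall>\<phi>. test_fun K \<phi> \<longrightarrow>
        integral\<^sup>L (lebesgue_on K) (\<lambda>x. \<tau> x \<bullet> grad_c \<phi> x) = - integral\<^sup>L (lebesgue_on K) (\<lambda>x. q x * \<phi> x))"

text \<open>Distributional curl-freeness: all components of curl w (partial_i w_j - partial_j w_i) vanish
weakly; for d = 2 this is div(w^perp) = 0, for d = 3 it is curl w = 0.\<close>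
definition curl_free :: "(real^'n) set \<Rightarrow> (real^'n \<Rightarrow> real^'n) \<Rightarrow> bool" where
  "curl_free K w \<longleftrightarrow> (\<forall>\<phi> i j. test_fun K \<phi> \<longrightarrow>
     integral\<^sup>L (lebesgue_on K) (\<lambda>x. w x $ i * partial \<phi> j x - w x $ j * partial \<phi> i x) = 0)"

definition is_trace :: "(real^'n) set set \<Rightarrow> (real^'n) set \<Rightarrow> (real^'n \<Rightarrow> real) \<Rightarrow> (real^'n \<Rightarrow> real) \<Rightarrow> bool" where
  "is_trace \<F> K v t \<longleftrightarrow> (\<exists>g. weak_grad K v g \<and>
     (\<forall>F\<in>facesK \<F> K. L2 (face_measure F) t) \<and>
     (\<exists>vm. (\<forall>m. smooth (vm m)) \<and>
        (\<lambda>m. integral\<^sup>L (lebesgue_on K) (\<lambda>x. (vm m x - v x)\<^sup>2)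
            + integral\<^sup>L (lebesgue_on K) (\<lambda>x. (norm (grad_c (vm m) x - g x))\<^sup>2)) \<longlonglongrightarrow> 0 \<and>
        (\<lambda>m. \<Sum>F\<in>facesK \<F> K. integral\<^sup>L (face_measure F) (\<lambda>x. (vm m x - t x)\<^sup>2)) \<longlonglongrightarrow> 0))"

text \<open>g (square integrable on the faces of K) is the normal trace of tau in H(div;K), defined by
duality with traces of H^1(K) functions (Green's formula).\<close>
definition normal_trace :: "(real^'n) set set \<Rightarrow> (real^'n) set \<Rightarrow> (real^'n \<Rightarrow> real^'n) \<Rightarrow> (real^'n \<Rightarrow> real) \<Rightarrow> bool" where
  "normal_trace \<F> K \<tau> g \<longleftrightarrow> (\<exists>q. weak_div K \<tau> q) \<and> (\<forall>F\<in>facesK \<F> K. L2 (face_measure F) g) \<and>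
     (\<forall>q \<phi> g\<phi> t. weak_div K \<tau> q \<longrightarrow> weak_grad K \<phi> g\<phi> \<longrightarrow> is_trace \<F> K \<phi> t \<longrightarrow>
        integral\<^sup>L (lebesgue_on K) (\<lambda>x. \<tau> x \<bullet> g\<phi> x) + integral\<^sup>L (lebesgue_on K) (\<lambda>x. q x * \<phi> x)
        = (\<Sum>F\<in>facesK \<F> K. integral\<^sup>L (face_measure F) (\<lambda>x. g x * t x)))"

definition poly_fun :: "nat \<Rightarrow> (real^'n \<Rightarrow> real) \<Rightarrow> bool" where
  "poly_fun n p \<longleftrightarrow> (\<exists>c. \<forall>x. p x =
     (\<Sum>\<alpha>\<in>{\<alpha>::'n \<Rightarrow> nat. sum \<alpha> UNIV \<le> n}. c \<alpha> * (\<Prod>i\<in>UNIV. (x $ i) ^ \<alpha> i)))"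

definition poly_on :: "(real^'n) measure \<Rightarrow> nat \<Rightarrow> (real^'n \<Rightarrow> real) \<Rightarrow> bool" where
  "poly_on M n v \<longleftrightarrow> (\<exists>p. poly_fun n p \<and> (AE x in M. v x = p x))"

definition l2proj :: "(real^'n) measure \<Rightarrow> nat \<Rightarrow> (real^'n \<Rightarrow> real) \<Rightarrow> (real^'n \<Rightarrow> real) \<Rightarrow> bool" where
  "l2proj M n v w \<longleftrightarrow> poly_on M n w \<and>
     (\<forall>p. poly_fun n p \<longrightarrow> integral\<^sup>L M (\<lambda>x. (v x - w x) * p x) = 0)"

definition Sigma_loc :: "(real^'n) set set \<Rightarrow> (real^'n \<Rightarrow> real^'n^'n) \<Rightarrow> nat \<Rightarrow> nat \<Rightarrow> (real^'n) set \<Rightarrow> (real^'n \<Rightarrow> real^'n) \<Rightarrow> bool" where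
  "Sigma_loc \<F> b l k K \<tau> \<longleftrightarrow> (\<exists>q. weak_div K \<tau> q) \<and>
     curl_free K (\<lambda>x. matrix_inv (b x) *v \<tau> x) \<and>
     (\<exists>q. weak_div K \<tau> q \<and> poly_on (lebesgue_on K) (l - 1) q) \<and>
     (\<exists>g. normal_trace \<F> K \<tau> g \<and> (\<forall>F\<in>facesK \<F> K. poly_on (face_measure F) (k - 1) g))"

definition V_loc :: "(real^'n) set set \<Rightarrow> (real^'n \<Rightarrow> real^'n^'n) \<Rightarrow> nat \<Rightarrow> nat \<Rightarrow> (real^'n) set \<Rightarrow> (real^'n \<Rightarrow> real) \<Rightarrow> bool" where
  "V_loc \<F> b l k K v \<longleftrightarrow> (\<exists>gv. weak_grad K v gv \<and>
     (\<exists>q. weak_div K (\<lambda>x. b x *v gv x) q \<and> poly_on (lebesgue_on K) (l - 1) q) \<and>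
     (\<exists>g. normal_trace \<F> K (\<lambda>x. b x *v gv x) g \<and> (\<forall>F\<in>facesK \<F> K. poly_on (face_measure F) (k - 1) g)))"

text \<open>Jump condition defining tilde H^1_0: pi^{k-1}_F of the jump vanishes on every face.\<close>
definition jumps_vanish :: "(real^'n) set set \<Rightarrow> (real^'n) set set \<Rightarrow> ((real^'n) set \<Rightarrow> real^'n) \<Rightarrow> nat \<Rightarrow>
    ((real^'n) set \<Rightarrow> real^'n \<Rightarrow> real) \<Rightarrow> bool" where
  "jumps_vanish \<K> \<F> nF k v \<longleftrightarrow> (\<exists>t. (\<forall>K\<in>\<K>. is_trace \<F> K (v K) (t K)) \<and>
     (\<forall>F\<in>\<F>. \<forall>p. poly_fun (k - 1) p \<longrightarrow>
        integral\<^sup>L (face_measure F)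
          (\<lambda>x. (\<Sum>K\<in>{K\<in>\<K>. F \<in> facesK \<F> K}. (outer_normal K F \<bullet> nF F) * t K x) * p x) = 0))"

definition V0 :: "(real^'n) set set \<Rightarrow> (real^'n) set set \<Rightarrow> ((real^'n) set \<Rightarrow> real^'n) \<Rightarrow> (real^'n \<Rightarrow> real^'n^'n) \<Rightarrow>
    nat \<Rightarrow> nat \<Rightarrow> ((real^'n) set \<Rightarrow> real^'n \<Rightarrow> real) \<Rightarrow> bool" where
  "V0 \<K> \<F> nF b l k v \<longleftrightarrow> (\<forall>K\<in>\<K>. V_loc \<F> b l k K (v K)) \<and> jumps_vanish \<K> \<F> nF k v"

definition Lambda :: "(real^'n) set set \<Rightarrow> (real^'n) set set \<Rightarrow> ((real^'n) set \<Rightarrow> real^'n) \<Rightarrow> (real^'n \<Rightarrow> real^'n^'n) \<Rightarrow>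
    nat \<Rightarrow> nat \<Rightarrow> ((real^'n) set \<Rightarrow> real^'n \<Rightarrow> real) \<Rightarrow> bool" where
  "Lambda \<K> \<F> nF b l k vB \<longleftrightarrow> (\<forall>K\<in>\<K>. \<forall>F\<in>facesK \<F> K. poly_on (face_measure F) (k - 1) (vB K)) \<and>
     (\<exists>v t. V0 \<K> \<F> nF b l k v \<and> (\<forall>K\<in>\<K>. is_trace \<F> K (v K) (t K) \<and>
        (\<forall>F\<in>facesK \<F> K. l2proj (face_measure F) (k - 1) (t K) (vB K))))"

definition bpair :: "(real^'n) set set \<Rightarrow> (real^'n) set set \<Rightarrow> ((real^'n) set \<Rightarrow> real^'n \<Rightarrow> real) \<Rightarrow>
    ((real^'n) set \<Rightarrow> real^'n \<Rightarrow> real) \<Rightarrow> real" where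
  "bpair \<K> \<F> g w = (\<Sum>K\<in>\<K>. \<Sum>F\<in>facesK \<F> K. integral\<^sup>L (face_measure F) (\<lambda>x. g K x * w K x))"

definition dHM :: "(real^'n) set set \<Rightarrow> (real^'n) set set \<Rightarrow> ((real^'n) set \<Rightarrow> real^'n) \<Rightarrow> (real^'n \<Rightarrow> real^'n^'n) \<Rightarrow>
    (real^'n \<Rightarrow> real) \<Rightarrow> nat \<Rightarrow> nat \<Rightarrow> ((real^'n) set \<Rightarrow> real^'n \<Rightarrow> real^'n) \<Rightarrow>
    ((real^'n) set \<Rightarrow> real^'n \<Rightarrow> real) \<Rightarrow> ((real^'n) set \<Rightarrow> real^'n \<Rightarrow> real) \<Rightarrow> bool" where
  "dHM \<K> \<F> nF b f l k \<sigma> u uB \<longleftrightarrow>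
     (\<forall>K\<in>\<K>. Sigma_loc \<F> b l k K (\<sigma> K)) \<and>
     (\<forall>K\<in>\<K>. poly_on (lebesgue_on K) (l - 1) (u K)) \<and>
     Lambda \<K> \<F> nF b l k uB \<and>
     (\<forall>\<tau> q\<tau> g\<tau>. (\<forall>K\<in>\<K>. Sigma_loc \<F> b l k K (\<tau> K) \<and> weak_div K (\<tau> K) (q\<tau> K) \<and> normal_trace \<F> K (\<tau> K) (g\<tau> K)) \<longrightarrow>
        (\<Sum>K\<in>\<K>. integral\<^sup>L (lebesgue_on K) (\<lambda>x. (matrix_inv (b x) *v \<sigma> K x) \<bullet> \<tau> K x))
        + (\<Sum>K\<in>\<K>. integral\<^sup>L (lebesgue_on K) (\<lambda>x. u K x * q\<tau> K x))
        - bpair \<K> \<F> g\<tau> uB = 0) \<and>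
     (\<forall>v q\<sigma>. (\<forall>K\<in>\<K>. poly_on (lebesgue_on K) (l - 1) (v K) \<and> weak_div K (\<sigma> K) (q\<sigma> K)) \<longrightarrow>
        - (\<Sum>K\<in>\<K>. integral\<^sup>L (lebesgue_on K) (\<lambda>x. q\<sigma> K x * v K x))
        = (\<Sum>K\<in>\<K>. integral\<^sup>L (lebesgue_on K) (\<lambda>x. f x * v K x))) \<and>
     (\<forall>vB g\<sigma>. Lambda \<K> \<F> nF b l k vB \<and> (\<forall>K\<in>\<K>. normal_trace \<F> K (\<sigma> K) (g\<sigma> K)) \<longrightarrow>
        bpair \<K> \<F> g\<sigma> vB = 0)"

definition dP :: "(real^'n) set set \<Rightarrow> (real^'n) set set \<Rightarrow> ((real^'n) set \<Rightarrow> real^'n) \<Rightarrow> (real^'n \<Rightarrow> real^'n^'n) \<Rightarrow>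
    (real^'n \<Rightarrow> real) \<Rightarrow> nat \<Rightarrow> nat \<Rightarrow> ((real^'n) set \<Rightarrow> real^'n \<Rightarrow> real) \<Rightarrow> bool" where
  "dP \<K> \<F> nF b f l k u \<longleftrightarrow> V0 \<K> \<F> nF b l k u \<and>
     (\<forall>v gu gv w. V0 \<K> \<F> nF b l k v \<longrightarrow>
        (\<forall>K\<in>\<K>. weak_grad K (u K) (gu K) \<and> weak_grad K (v K) (gv K) \<and> l2proj (lebesgue_on K) (l - 1) (v K) (w K)) \<longrightarrow>
        (\<Sum>K\<in>\<K>. integral\<^sup>L (lebesgue_on K) (\<lambda>x. (b x *v gu K x) \<bullet> gv K x))
        = (\<Sum>K\<in>\<K>. integral\<^sup>L (lebesgue_on K) (\<lambda>x. f x * w K x)))"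

definition admissible_data :: "(real^'n) set \<Rightarrow> (real^'n \<Rightarrow> real^'n^'n) \<Rightarrow> real \<Rightarrow> real \<Rightarrow> (real^'n \<Rightarrow> real) \<Rightarrow> bool" where
  "admissible_data \<Omega> b bflat bsharp f \<longleftrightarrow>
     L2 (lebesgue_on \<Omega>) f \<and>
     (\<forall>i j. (\<lambda>x. b x $ i $ j) \<in> borel_measurable (lebesgue_on \<Omega>)) \<and>
     (\<forall>x\<in>\<Omega>. transpose (b x) = b x) \<and>
     0 < bflat \<and> bflat \<le> bsharp \<and>
     (AE x in lebesgue_on \<Omega>. \<forall>\<xi>. bflat * (norm \<xi>)\<^sup>2 \<le> (b x *v \<xi>) \<bullet> \<xi> \<and> (b x *v \<xi>) \<bullet> \<xi> \<le> bsharp * (norm \<xi>)\<^sup>2)"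

end

theory Submission
  imports Defs "HOL-Computational_Algebra.Polynomial"
begin

lemma L2_integrable_sq: "L2 M f \<Longrightarrow> integrable M (\<lambda>x. (f x)\<^sup>2)" by (simp add: L2_def)
lemma L2_meas: "L2 M f \<Longrightarrow> f \<in> borel_measurable M" by (simp add: L2_def)

lemma L2_mult_integrable:
  assumes "L2 M f" "L2 M g" shows "integrable M (\<lambda>x. f x * g x)"
proof (rule Bochner_Integration.integrable_bound)
  show "integrable M (\<lambda>x. (f x)\<^sup>2 + (g x)\<^sup>2)" using assms by (simp add: L2_def)
  show "(\<lambda>x. f x * g x) \<in> borel_measurable M" using assms by (auto simp: L2_def)
  show "AE x in M. norm (f x * g x) \<le> norm ((f x)\<^sup>2 + (g x)\<^sup>2)"
  proof (rule AE_I2)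
    fix x have "2 * \<bar>f x\<bar> * \<bar>g x\<bar> \<le> (f x)\<^sup>2 + (g x)\<^sup>2"
      using sum_squares_bound[of "\<bar>f x\<bar>" "\<bar>g x\<bar>"] by (simp add: power2_eq_square)
    moreover have "\<bar>f x\<bar> * \<bar>g x\<bar> \<ge> 0" by simp
    moreover have "(f x)\<^sup>2 \<ge> 0" "(g x)\<^sup>2 \<ge> 0" by simp_all
    ultimately have "\<bar>f x\<bar> * \<bar>g x\<bar> \<le> (f x)\<^sup>2 + (g x)\<^sup>2" by linarith
    then show "norm (f x * g x) \<le> norm ((f x)\<^sup>2 + (g x)\<^sup>2)" by (simp add: abs_mult)
  qed
qed

lemma L2_add: assumes "L2 M f" "L2 M g" shows "L2 M (\<lambda>x. f x + g x)"
proof -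
  have "integrable M (\<lambda>x. (f x)\<^sup>2 + (g x)\<^sup>2 + 2 * (f x * g x))"
    using assms L2_mult_integrable[OF assms] by (intro Bochner_Integration.integrable_add) (auto simp: L2_def)
  then show ?thesis using assms unfolding L2_def by (auto simp: power2_sum algebra_simps)
qed

lemma L2_cmult: assumes "L2 M f" shows "L2 M (\<lambda>x. c * f x)"
  using assms unfolding L2_def by (auto simp: power_mult_distrib)

lemma L2_uminus: assumes "L2 M f" shows "L2 M (\<lambda>x. - f x)"
  using assms unfolding L2_def by simp

lemma L2_diff: assumes "L2 M f" "L2 M g" shows "L2 M (\<lambda>x. f x - g x)"
  using L2_add[OF assms(1) L2_uminus[OF assms(2)]] by simp

lemma L2_zero: "L2 M (\<lambda>x. 0)" by (simp add: L2_def)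

lemma L2_sum: "(\<And>a. a \<in> A \<Longrightarrow> L2 M (f a)) \<Longrightarrow> L2 M (\<lambda>x. \<Sum>a\<in>A. f a x)"
proof (induction A rule: infinite_finite_induct)
  case (infinite A) then show ?case by (simp add: L2_zero)
next
  case empty then show ?case by (simp add: L2_zero)
next
  case (insert a A) then show ?case by (simp add: L2_add)
qed

lemma L2_cong_AE: assumes "L2 M f" "g \<in> borel_measurable M" "AE x in M. f x = g x" shows "L2 M g"
proof -
  have "integrable M (\<lambda>x. (g x)\<^sup>2)"
    by (rule integrable_cong_AE_imp[where g="\<lambda>x. (f x)\<^sup>2"]) (use assms in \<open>auto simp: L2_def elim!: AE_mp\<close>)
  then show ?thesis using assms by (simp add: L2_def)
qed

definition ip :: "'a measure \<Rightarrow> ('a \<Rightarrow> real) \<Rightarrow> ('a \<Rightarrow> real) \<Rightarrow> real" where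
  "ip M f g = integral\<^sup>L M (\<lambda>x. f x * g x)"

lemma ip_comm: "ip M f g = ip M g f" by (simp add: ip_def mult.commute)

lemma ip_diff_left: "L2 M f \<Longrightarrow> L2 M g \<Longrightarrow> L2 M h \<Longrightarrow> ip M (\<lambda>x. f x - g x) h = ip M f h - ip M g h"
  unfolding ip_def by (simp add: left_diff_distrib L2_mult_integrable)

lemma ip_add_left: "L2 M f \<Longrightarrow> L2 M g \<Longrightarrow> L2 M h \<Longrightarrow> ip M (\<lambda>x. f x + g x) h = ip M f h + ip M g h"
  unfolding ip_def by (simp add: distrib_right L2_mult_integrable)

lemma ip_cmult_left: "ip M (\<lambda>x. c * f x) h = c * ip M f h"
  unfolding ip_def by (simp add: mult.assoc)

lemma ip_sum_left: "(\<And>a. a \<in> A \<Longrightarrow> L2 M (f a)) \<Longrightarrow> L2 M h \<Longrightarrow>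
   ip M (\<lambda>x. \<Sum>a\<in>A. f a x) h = (\<Sum>a\<in>A. ip M (f a) h)"
  unfolding ip_def by (simp add: sum_distrib_right L2_mult_integrable)

lemma ip_orth_sum:
  assumes "\<And>a. a \<in> A \<Longrightarrow> L2 M (\<phi> a)" "L2 M g" "\<And>a. a \<in> A \<Longrightarrow> ip M (\<phi> a) g = 0"
  shows "ip M (\<lambda>x. \<Sum>a\<in>A. e a * \<phi> a x) g = 0"
  using assms by (subst ip_sum_left) (auto intro: L2_cmult simp: ip_cmult_left)

lemma proj_exists:
  assumes "finite A" "\<And>a. a \<in> A \<Longrightarrow> L2 M (\<phi> a)"
  shows "L2 M t \<Longrightarrow> \<exists>c. \<forall>b\<in>A. ip M (\<lambda>x. t x - (\<Sum>a\<in>A. c a * \<phi> a x)) (\<phi> b) = 0"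
  using assms
proof (induction A arbitrary: t rule: finite_induct)
  case empty then show ?case by simp
next
  case (insert a A)
  have L2A: "\<And>b. b \<in> A \<Longrightarrow> L2 M (\<phi> b)" and L2a: "L2 M (\<phi> a)" using insert by auto
  have L2S: "\<And>c. L2 M (\<lambda>x. \<Sum>b\<in>A. c b * \<phi> b x)" by (intro L2_sum L2_cmult L2A)
  obtain c0 where c0: "\<And>b. b \<in> A \<Longrightarrow> ip M (\<lambda>x. t x - (\<Sum>a\<in>A. c0 a * \<phi> a x)) (\<phi> b) = 0"
    using insert.IH[OF insert.prems(1) L2A] by blast
  obtain e where e: "\<And>b. b \<in> A \<Longrightarrow> ip M (\<lambda>x. \<phi> a x - (\<Sum>a\<in>A. e a * \<phi> a x)) (\<phi> b) = 0"
    using insert.IH[OF L2a L2A] by blast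
  define w0 where "w0 = (\<lambda>x. \<Sum>a\<in>A. c0 a * \<phi> a x)"
  define s where "s = (\<lambda>x. \<Sum>a\<in>A. e a * \<phi> a x)"
  define r where "r = (\<lambda>x. \<phi> a x - s x)"
  have L2w0: "L2 M w0" and L2s: "L2 M s" unfolding w0_def s_def by (rule L2S)+
  have L2r: "L2 M r" unfolding r_def by (intro L2_diff L2a L2s)
  have L2t: "L2 M t" by fact
  have L2tw: "L2 M (\<lambda>x. t x - w0 x)" by (intro L2_diff L2t L2w0)
  have phia: "\<phi> a = (\<lambda>x. r x + s x)" unfolding r_def by simp
  have rA: "\<And>b. b \<in> A \<Longrightarrow> ip M r (\<phi> b) = 0" using e unfolding r_def s_def by simp
  have twA: "\<And>b. b \<in> A \<Longrightarrow> ip M (\<lambda>x. t x - w0 x) (\<phi> b) = 0" using c0 unfolding w0_def by simp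
  define N where "N = ip M r r"
  show ?case
  proof (cases "N = 0")
    case True
    have "AE x in M. (r x)\<^sup>2 = 0"
      using True L2r unfolding N_def ip_def L2_def
      by (subst integral_nonneg_eq_0_iff_AE[symmetric]) (auto simp: power2_eq_square)
    then have rAE: "AE x in M. r x = 0" by simp
    define c where "c = c0(a := 0)"
    have Sc: "\<And>x. (\<Sum>b\<in>insert a A. c b * \<phi> b x) = w0 x"
      using insert.hyps unfolding c_def w0_def by (auto intro!: sum.cong)
    have "ip M (\<lambda>x. t x - w0 x) (\<phi> a) = 0"
    proof -
      have "ip M (\<lambda>x. t x - w0 x) (\<phi> a) = ip M r (\<lambda>x. t x - w0 x) + ip M s (\<lambda>x. t x - w0 x)"
        by (subst ip_comm, subst phia, rule ip_add_left[OF L2r L2s L2tw])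
      moreover have "ip M r (\<lambda>x. t x - w0 x) = 0" unfolding ip_def
        by (rule integral_eq_zero_AE) (use rAE in auto)
      moreover have "ip M s (\<lambda>x. t x - w0 x) = 0" unfolding s_def
      proof (rule ip_orth_sum[OF L2A L2tw])
        fix b assume "b \<in> A"
        then show "ip M (\<phi> b) (\<lambda>x. t x - w0 x) = 0" using twA[of b] ip_comm[of M "\<phi> b"] by simp
      qed
      ultimately show ?thesis by simp
    qed
    then show ?thesis using twA by (intro exI[of _ c]) (simp add: Sc)
  next
    case False
    define lam where "lam = ip M (\<lambda>x. t x - w0 x) r / N"
    define c where "c = (\<lambda>b. if b = a then lam else c0 b - lam * e b)"
    have Sc: "\<And>x. (\<Sum>b\<in>insert a A. c b * \<phi> b x) = w0 x + lam * r x"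
    proof -
      fix x
      have "(\<Sum>b\<in>insert a A. c b * \<phi> b x) = lam * \<phi> a x + (\<Sum>b\<in>A. (c0 b - lam * e b) * \<phi> b x)"
        using insert.hyps unfolding c_def by (auto intro!: sum.cong)
      also have "\<dots> = lam * \<phi> a x + w0 x - lam * s x"
        unfolding w0_def s_def by (simp add: left_diff_distrib sum_subtractf sum_distrib_left mult.assoc)
      finally show "(\<Sum>b\<in>insert a A. c b * \<phi> b x) = w0 x + lam * r x"
        unfolding r_def by (simp add: algebra_simps)
    qed
    define g where "g = (\<lambda>x. t x - (w0 x + lam * r x))"
    have g_eq: "g = (\<lambda>x. (t x - w0 x) - lam * r x)" unfolding g_def by auto
    have L2g: "L2 M g" unfolding g_eq by (intro L2_diff L2tw L2_cmult L2r)
    have gA: "ip M g (\<phi> b) = 0" if "b \<in> A" for b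
      unfolding g_eq using that L2A[OF that] L2tw L2r
      by (simp add: ip_diff_left L2_cmult ip_cmult_left twA rA)
    have "ip M g r = ip M (\<lambda>x. t x - w0 x) r - lam * N"
      unfolding g_eq N_def by (simp add: ip_diff_left[OF L2tw L2_cmult[OF L2r] L2r] ip_cmult_left)
    then have gr: "ip M g r = 0" using False by (simp add: lam_def)
    have "ip M g (\<phi> a) = 0"
    proof -
      have "ip M g (\<phi> a) = ip M r g + ip M s g"
        by (subst ip_comm, subst phia, rule ip_add_left[OF L2r L2s L2g])
      moreover have "ip M s g = 0" unfolding s_def
      proof (rule ip_orth_sum[OF L2A L2g])
        fix b assume "b \<in> A"
        then show "ip M (\<phi> b) g = 0" using gA[of b] ip_comm[of M "\<phi> b"] by simp
      qed
      ultimately show ?thesis using gr by (simp add: ip_comm)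
    qed
    then show ?thesis using gA unfolding g_def by (intro exI[of _ c]) (simp add: Sc)
  qed
qed

lemma complete_measure_lebesgue_on:
  assumes "K \<in> sets lebesgue" shows "complete_measure (lebesgue_on K)"
proof
  fix A B assume BA: "B \<subseteq> A" and A: "A \<in> null_sets (lebesgue_on K)"
  then have "A \<subseteq> K" "A \<in> null_sets lebesgue" using null_sets_restrict_space[OF assms] by auto
  then have "B \<in> null_sets lebesgue" using BA completion.complete2 by blast
  moreover have "B \<subseteq> K" using BA \<open>A \<subseteq> K\<close> by blast
  ultimately show "B \<in> sets (lebesgue_on K)" using assms
    by (simp add: sets_restrict_space_iff null_setsD2)
qed

lemma complete_AE_measurable:
  fixes f g :: "'a \<Rightarrow> 'b::topological_space"
  assumes c: "complete_measure M" and f: "f \<in> borel_measurable M" and ae: "AE x in M. f x = g x"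
  shows "g \<in> borel_measurable M"
proof (rule measurableI)
  fix x assume "x \<in> space M" then show "g x \<in> space borel" by simp
next
  fix A :: "'b set" assume A: "A \<in> sets borel"
  have fA: "f -` A \<inter> space M \<in> sets M" using f A by (rule measurable_sets)
  show "g -` A \<inter> space M \<in> sets M"
  proof (rule complete_measure.in_sets_AE[OF c _ fA])
    show "AE x in M. (x \<in> f -` A \<inter> space M) = (x \<in> g -` A \<inter> space M)"
      using ae by (auto elim!: AE_mp)
  qed auto
qed

definition mnm :: "('n \<Rightarrow> nat) \<Rightarrow> real^'n \<Rightarrow> real" where
  "mnm \<alpha> x = (\<Prod>i\<in>UNIV. (x $ i) ^ \<alpha> i)"

definition PI :: "nat \<Rightarrow> ('n::finite \<Rightarrow> nat) set" where
  "PI n = {\<alpha>. sum \<alpha> UNIV \<le> n}"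

lemma finite_PI: "finite (PI n :: ('n::finite \<Rightarrow> nat) set)"
proof (rule finite_subset)
  show "PI n \<subseteq> PiE (UNIV::'n set) (\<lambda>_. {..n})"
  proof
    fix \<alpha> :: "'n \<Rightarrow> nat" assume "\<alpha> \<in> PI n"
    then have "\<alpha> i \<le> n" for i unfolding PI_def
      using member_le_sum[of i UNIV \<alpha>] by auto
    then show "\<alpha> \<in> PiE UNIV (\<lambda>_. {..n})" by (auto simp: PiE_def extensional_def)
  qed
  show "finite (PiE (UNIV::'n set) (\<lambda>_. {..n}))" by (rule finite_PiE) auto
qed

lemma poly_fun_iff: "poly_fun n p \<longleftrightarrow> (\<exists>c. p = (\<lambda>x. \<Sum>\<alpha>\<in>PI n. c \<alpha> * mnm \<alpha> x))"
  by (simp add: poly_fun_def PI_def mnm_def fun_eq_iff)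

lemma continuous_mnm: "continuous_on UNIV (mnm \<alpha> :: real^'n::finite \<Rightarrow> real)"
  unfolding mnm_def by (intro continuous_intros)

lemma continuous_poly_fun: "poly_fun n p \<Longrightarrow> continuous_on UNIV p"
proof -
  have c: "continuous_on UNIV (\<lambda>x. mnm \<alpha> x :: real)" for \<alpha> :: "'a \<Rightarrow> nat"
    using continuous_mnm[of \<alpha>] by simp
  show "poly_fun n p \<Longrightarrow> continuous_on UNIV p"
    unfolding poly_fun_iff by (auto intro!: continuous_intros c)
qed

lemma poly_fun_mnm: assumes "\<alpha> \<in> PI n" shows "poly_fun n (mnm \<alpha>)"
  unfolding poly_fun_iff
proof (rule exI[of _ "\<lambda>\<beta>. if \<beta> = \<alpha> then 1 else 0"], rule ext)
  fix x
  have "(\<Sum>\<beta>\<in>PI n. (if \<beta> = \<alpha> then 1 else 0) * mnm \<beta> x) = (\<Sum>\<beta>\<in>PI n. if \<beta> = \<alpha> then mnm \<beta> x else 0)"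
    by (rule sum.cong) auto
  also have "\<dots> = mnm \<alpha> x" using assms by (simp add: finite_PI)
  finally show "mnm \<alpha> x = (\<Sum>\<beta>\<in>PI n. (if \<beta> = \<alpha> then 1 else 0) * mnm \<beta> x)" by simp
qed

lemma L2_contI:
  fixes f :: "'a::euclidean_space \<Rightarrow> real"
  assumes "finite_measure M" "f \<in> borel_measurable M" "bounded B" "AE x in M. x \<in> B" "continuous_on UNIV f"
  shows "L2 M f"
proof -
  have "compact (f ` closure B)"
    using assms by (intro compact_continuous_image) (auto intro: continuous_on_subset compact_closure[THEN iffD2])
  then obtain C where C: "\<And>y. y \<in> f ` closure B \<Longrightarrow> norm y \<le> C"
    using compact_imp_bounded bounded_iff by metis
  have "AE x in M. norm ((f x)\<^sup>2) \<le> C\<^sup>2"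
    using assms(4)
  proof (rule AE_mp, intro AE_I2 impI)
    fix x assume "x \<in> B" then have "f x \<in> f ` closure B" using closure_subset by blast
    then have "\<bar>f x\<bar> \<le> C" using C by force
    then have "\<bar>f x\<bar>\<^sup>2 \<le> C\<^sup>2" by (intro power_mono) auto
    then show "norm ((f x)\<^sup>2) \<le> C\<^sup>2" by simp
  qed
  then show ?thesis using assms(2)
    by (auto simp: L2_def intro!: finite_measure.integrable_const_bound[OF assms(1)])
qed

lemma L2_poly_fun: "(\<And>\<alpha>. L2 M (mnm \<alpha>)) \<Longrightarrow> poly_fun n p \<Longrightarrow> L2 M p"
  unfolding poly_fun_iff by (auto intro!: L2_sum L2_cmult)

lemma poly_proj_exists:
  assumes mnm: "\<And>\<alpha>. L2 M (mnm \<alpha> :: real^'n::finite \<Rightarrow> real)" and t: "L2 M t"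
  shows "\<exists>w. poly_fun n w \<and> (\<forall>p. poly_fun n p \<longrightarrow> integral\<^sup>L M (\<lambda>x. (t x - w x) * p x) = 0)"
proof -
  obtain c where c: "\<And>\<beta>. \<beta> \<in> PI n \<Longrightarrow> ip M (\<lambda>x. t x - (\<Sum>a\<in>PI n. c a * mnm a x)) (mnm \<beta>) = 0"
    using proj_exists[OF finite_PI, where M=M and \<phi>=mnm and t=t] mnm t by blast
  define w where "w = (\<lambda>x. \<Sum>a\<in>PI n. c a * mnm a x)"
  have pw: "poly_fun n w" unfolding poly_fun_iff w_def by blast
  have L2tw: "L2 M (\<lambda>x. t x - w x)" using L2_diff[OF t L2_poly_fun[OF mnm pw]] .
  have "integral\<^sup>L M (\<lambda>x. (t x - w x) * p x) = 0" if pp: "poly_fun n p" for p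
  proof -
    obtain d where d: "p = (\<lambda>x. \<Sum>\<alpha>\<in>PI n. d \<alpha> * mnm \<alpha> x)" using pp unfolding poly_fun_iff by blast
    have "ip M (\<lambda>x. \<Sum>\<alpha>\<in>PI n. d \<alpha> * mnm \<alpha> x) (\<lambda>x. t x - w x) = 0"
    proof (rule ip_orth_sum[OF mnm L2tw])
      fix \<beta> :: "'n \<Rightarrow> nat" assume "\<beta> \<in> PI n" then show "ip M (mnm \<beta>) (\<lambda>x. t x - w x) = 0"
        using c[of \<beta>] ip_comm[of M "mnm \<beta>"] unfolding w_def by simp
    qed
    then show ?thesis unfolding d ip_def by (simp add: mult.commute)
  qed
  then show ?thesis using pw by blast
qed

lemma l2proj_exists:
  assumes mnm: "\<And>\<alpha>. L2 M (mnm \<alpha> :: real^'n::finite \<Rightarrow> real)" and t: "L2 M t"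
  shows "\<exists>w. poly_fun n w \<and> l2proj M n t w"
  using poly_proj_exists[OF mnm t, of n] unfolding l2proj_def poly_on_def by blast

lemma cell_facts:
  assumes "lipschitz_polytope K"
  shows "open K" "bounded K" "K \<in> sets lebesgue" "K \<in> sets borel"
  using assms unfolding lipschitz_polytope_def lipschitz_in_def by auto

lemma finite_measure_lebesgue_on:
  assumes "bounded K" "K \<in> sets lebesgue"
  shows "finite_measure (lebesgue_on K)"
proof (rule finite_measureI)
  obtain a b where "K \<subseteq> cbox a b" using assms bounded_subset_cbox_symmetric by metis
  then have "emeasure lebesgue K \<le> emeasure lebesgue (cbox a b)"
    by (intro emeasure_mono) auto
  also have "\<dots> < \<infinity>" using emeasure_bounded_finite[of "cbox a b"] by simp
  finally show "emeasure (lebesgue_on K) (space (lebesgue_on K)) \<noteq> \<infinity>"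
    using assms by (simp add: emeasure_restrict_space)
qed

lemma L2_cont_cell:
  fixes f :: "real^'n \<Rightarrow> real"
  assumes "bounded K" "K \<in> sets lebesgue" "continuous_on UNIV f"
  shows "L2 (lebesgue_on K) f"
  by (rule L2_contI[OF finite_measure_lebesgue_on[OF assms(1,2)] _ assms(1) _ assms(3)])
     (auto intro!: continuous_imp_measurable_on_sets_lebesgue continuous_on_subset[OF assms(3)] assms(2))

lemma L2_mnm_cell:
  assumes "bounded K" "K \<in> sets lebesgue"
  shows "L2 (lebesgue_on K) (mnm \<alpha> :: real^'n::finite \<Rightarrow> real)"
  by (rule L2_cont_cell[OF assms continuous_mnm])

lemma L2_poly_cell:
  assumes "bounded K" "K \<in> sets lebesgue" "poly_fun n (p :: real^'n::finite \<Rightarrow> real)"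
  shows "L2 (lebesgue_on K) p"
  by (rule L2_cont_cell[OF assms(1,2) continuous_poly_fun[OF assms(3)]])

lemma L2_poly_on_cell:
  assumes "bounded K" "K \<in> sets lebesgue" "poly_on (lebesgue_on K) n (u :: real^'n::finite \<Rightarrow> real)"
  shows "L2 (lebesgue_on K) u"
proof -
  obtain p where p: "poly_fun n p" "AE x in lebesgue_on K. u x = p x" using assms(3) poly_on_def by blast
  have L2p: "L2 (lebesgue_on K) p" by (rule L2_poly_cell[OF assms(1,2) p(1)])
  have "u \<in> borel_measurable (lebesgue_on K)"
    by (rule complete_AE_measurable[OF complete_measure_lebesgue_on[OF assms(2)] L2_meas[OF L2p]])
       (use p(2) in \<open>auto elim!: AE_mp\<close>)
  then show ?thesis by (rule L2_cong_AE[OF L2p]) (use p(2) in \<open>auto elim!: AE_mp\<close>)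
qed

lemma AE_scale_measure: "(AE x in M. P x) \<Longrightarrow> (AE x in scale_measure r M. P x)"
proof -
  assume "AE x in M. P x"
  then obtain N where N: "{x \<in> space M. \<not> P x} \<subseteq> N" "N \<in> null_sets M" by (auto elim!: AE_E)
  have "N \<in> null_sets (scale_measure r M)" using N(2) by (auto simp: null_sets_def)
  then show ?thesis using N(1) by (intro AE_I[where N=N]) (auto simp: space_scale_measure)
qed

lemma face_basic:
  assumes "lipschitz_face F"
  shows "bounded F" "F \<in> sets borel"
proof -
  obtain n c where "lipschitz_in {x. n \<bullet> x = c} F" using assms lipschitz_face_def by blast
  then have F: "bounded F" "openin (top_of_set {x. n \<bullet> x = c}) F" by (auto simp: lipschitz_in_def)
  then obtain U where U: "open U" "F = {x. n \<bullet> x = c} \<inter> U" by (auto simp: openin_open)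
  show "bounded F" by fact
  have "closed {x. n \<bullet> x = c}" by (rule closed_hyperplane)
  then show "F \<in> sets borel" using U by auto
qed

lemma face_measure_unfold:
  "face_measure F = completion (scale_measure (ennreal (1/2)) (distr (lebesgue_on
      {x. \<bar>x \<bullet> face_normal F - face_offset F\<bar> < 1 \<and> (x - (x \<bullet> face_normal F - face_offset F) *\<^sub>R face_normal F) \<in> F})
      lborel (\<lambda>x. x - (x \<bullet> face_normal F - face_offset F) *\<^sub>R face_normal F)))"
  unfolding face_measure_def Let_def by simp

lemma face_measure_space [simp]: "space (face_measure F) = UNIV"
  unfolding face_measure_unfold by (simp add: space_scale_measure)

lemma face_measure_borel:
  fixes f :: "real^'n \<Rightarrow> 'b::topological_space"
  assumes "f \<in> borel_measurable borel"
  shows "f \<in> borel_measurable (face_measure F)"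
  unfolding face_measure_unfold
  by (rule measurable_completion, subst measurable_cong_sets[OF sets_scale_measure refl])
     (simp add: assms measurable_cong_sets[OF sets_distr[THEN trans[OF _ sets_lborel]] refl])

lemma face_measure_cont:
  fixes f :: "real^'n \<Rightarrow> real"
  shows "continuous_on UNIV f \<Longrightarrow> f \<in> borel_measurable (face_measure F)"
  by (intro face_measure_borel borel_measurable_continuous_onI)

lemma face_measure_sets: "A \<in> sets borel \<Longrightarrow> A \<in> sets (face_measure F)"
  unfolding face_measure_unfold by (intro sets_completionI_sets) simp

lemma face_measure_complete: "complete_measure (face_measure F)"
  unfolding face_measure_unfold by (rule completion.complete_measure_axioms)

lemma face_measure_facts:
  assumes "lipschitz_face F"
  shows "finite_measure (face_measure F)" "AE x in face_measure F. x \<in> F"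
proof -
  define n where "n = face_normal F"
  define c where "c = face_offset F"
  define P where "P = (\<lambda>x::real^'a. x - (x \<bullet> n - c) *\<^sub>R n)"
  define S where "S = {x. \<bar>x \<bullet> n - c\<bar> < 1 \<and> P x \<in> F}"
  have fm: "face_measure F = completion (scale_measure (ennreal (1/2)) (distr (lebesgue_on S) lborel P))"
    unfolding face_measure_unfold S_def P_def n_def c_def ..
  have Fb: "bounded F" "F \<in> sets borel" using face_basic[OF assms] by auto
  have Pc: "continuous_on UNIV P" unfolding P_def by (intro continuous_intros)
  have Pm: "P \<in> borel_measurable borel" by (rule borel_measurable_continuous_onI[OF Pc])
  have Sb: "S \<in> sets borel"
  proof -
    have "S = {x. \<bar>x \<bullet> n - c\<bar> < 1} \<inter> P -` F" unfolding S_def by auto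
    moreover have "{x. \<bar>x \<bullet> n - c\<bar> < 1} \<in> sets borel"
      by (intro borel_open open_Collect_less continuous_intros)
    moreover have "P -` F \<in> sets borel" using measurable_sets[OF Pm Fb(2)] by simp
    ultimately show ?thesis by simp
  qed
  then have Sl: "S \<in> sets lebesgue" by simp
  have Sbd: "bounded S"
  proof -
    obtain B where B: "\<And>y. y \<in> F \<Longrightarrow> norm y \<le> B" using Fb(1) bounded_iff by metis
    have "norm x \<le> B + norm n" if "x \<in> S" for x
    proof -
      have "x = P x + (x \<bullet> n - c) *\<^sub>R n" unfolding P_def by simp
      then have "norm x \<le> norm (P x) + \<bar>x \<bullet> n - c\<bar> * norm n"
        by (metis norm_scaleR norm_triangle_ineq)
      also have "\<dots> \<le> B + 1 * norm n"
        using that B[of "P x"] unfolding S_def by (intro add_mono mult_right_mono) auto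
      finally show ?thesis by simp
    qed
    then show ?thesis unfolding bounded_iff by blast
  qed
  have PmS: "P \<in> lebesgue_on S \<rightarrow>\<^sub>M lborel"
    by (subst measurable_cong_sets[OF refl sets_lborel])
       (rule continuous_imp_measurable_on_sets_lebesgue[OF continuous_on_subset[OF Pc] Sl], simp)
  show "finite_measure (face_measure F)"
  proof (rule finite_measureI)
    obtain a b where "S \<subseteq> cbox a b" using Sbd bounded_subset_cbox_symmetric by metis
    then have "emeasure lebesgue S \<le> emeasure lebesgue (cbox a b)"
      by (intro emeasure_mono) auto
    also have "\<dots> < \<infinity>" using emeasure_bounded_finite[of "cbox a b"] by simp
    finally have fin: "emeasure lebesgue S < \<infinity>" .
    have "emeasure (face_measure F) (space (face_measure F)) =
          ennreal (1/2) * emeasure (lebesgue_on S) (P -` UNIV \<inter> space (lebesgue_on S))"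
    proof -
      have "emeasure (face_measure F) (space (face_measure F)) =
          emeasure (scale_measure (ennreal (1/2)) (distr (lebesgue_on S) lborel P)) UNIV"
        unfolding fm by (subst emeasure_completion) (auto intro: sets_completionI_sets simp: space_scale_measure)
      then show ?thesis by (simp add: emeasure_distr[OF PmS])
    qed
    also have "\<dots> = ennreal (1/2) * emeasure lebesgue S"
      using Sl by (simp add: emeasure_restrict_space)
    finally show "emeasure (face_measure F) (space (face_measure F)) \<noteq> \<infinity>"
      using fin by (simp add: ennreal_mult_eq_top_iff)
  qed
  have "AE x in distr (lebesgue_on S) lborel P. x \<in> F"
  proof (subst AE_distr_iff[OF PmS])
    show "{x \<in> space lborel. x \<in> F} \<in> sets lborel" using Fb(2) by simp
    show "AE x in lebesgue_on S. P x \<in> F"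
      by (rule AE_I2) (use Sl in \<open>auto simp: S_def\<close>)
  qed
  then show "AE x in face_measure F. x \<in> F"
    unfolding fm by (intro AE_completion AE_scale_measure)
qed

lemma L2_cont_face:
  fixes f :: "real^'n \<Rightarrow> real"
  assumes "lipschitz_face F" "continuous_on UNIV f"
  shows "L2 (face_measure F) f"
  using face_measure_facts[OF assms(1)] face_basic[OF assms(1)]
  by (intro L2_contI[OF _ face_measure_cont[OF assms(2)] _ _ assms(2)]) auto

lemma L2_poly_on_face:
  assumes "lipschitz_face F" "poly_on (face_measure F) n (u :: real^'n::finite \<Rightarrow> real)"
  shows "L2 (face_measure F) u"
proof -
  obtain p where p: "poly_fun n p" "AE x in face_measure F. u x = p x" using assms(2) poly_on_def by blast
  have L2p: "L2 (face_measure F) p" by (rule L2_cont_face[OF assms(1) continuous_poly_fun[OF p(1)]])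
  have "u \<in> borel_measurable (face_measure F)"
    by (rule complete_AE_measurable[OF face_measure_complete L2_meas[OF L2p]])
       (use p(2) in \<open>auto elim!: AE_mp\<close>)
  then show ?thesis by (rule L2_cong_AE[OF L2p]) (use p(2) in \<open>auto elim!: AE_mp\<close>)
qed

lemma integral_cong_AE_complete:
  fixes f g :: "'a \<Rightarrow> real"
  assumes c: "complete_measure M" and ae: "AE x in M. f x = g x"
  shows "integral\<^sup>L M f = integral\<^sup>L M g"
proof (cases "f \<in> borel_measurable M")
  case True
  then have "g \<in> borel_measurable M" using complete_AE_measurable[OF c True ae] by simp
  then show ?thesis using integral_cong_AE[OF True _ ae] by blast
next
  case False
  have ae': "AE x in M. g x = f x" using ae by (auto elim!: AE_mp)
  have "g \<notin> borel_measurable M" using complete_AE_measurable[OF c _ ae'] False by blast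
  then have "\<not> integrable M g" "\<not> integrable M f" using False borel_measurable_integrable by blast+
  then show ?thesis by (simp add: not_integrable_integral_eq)
qed

lemma L2_poly_on_gen:
  assumes c: "complete_measure M" and m: "\<And>\<alpha>. L2 M (mnm \<alpha>)" and u: "poly_on M n (u :: real^'n::finite \<Rightarrow> real)"
  shows "L2 M u"
proof -
  obtain p where p: "poly_fun n p" "AE x in M. u x = p x" using u poly_on_def by blast
  have L2p: "L2 M p" by (rule L2_poly_fun[OF m p(1)])
  have "u \<in> borel_measurable M"
    by (rule complete_AE_measurable[OF c L2_meas[OF L2p]]) (use p(2) in \<open>auto elim!: AE_mp\<close>)
  then show ?thesis by (rule L2_cong_AE[OF L2p]) (use p(2) in \<open>auto elim!: AE_mp\<close>)
qed

lemma proj_pair: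
  assumes c: "complete_measure M" and m: "\<And>\<alpha>. L2 M (mnm \<alpha>)"
    and pr: "l2proj M n t (w :: real^'n::finite \<Rightarrow> real)" and t: "L2 M t" and g: "poly_on M n g"
  shows "integral\<^sup>L M (\<lambda>x. g x * t x) = integral\<^sup>L M (\<lambda>x. g x * w x)"
proof -
  have Lw: "L2 M w" using pr unfolding l2proj_def by (intro L2_poly_on_gen[OF c m]) auto
  have Lg: "L2 M g" by (rule L2_poly_on_gen[OF c m g])
  obtain p where p: "poly_fun n p" "AE x in M. g x = p x" using g poly_on_def by blast
  have "integral\<^sup>L M (\<lambda>x. (t x - w x) * p x) = 0" using pr p(1) unfolding l2proj_def by blast
  moreover have "integral\<^sup>L M (\<lambda>x. (t x - w x) * p x) = integral\<^sup>L M (\<lambda>x. g x * (t x - w x))"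
    by (rule integral_cong_AE_complete[OF c]) (use p(2) in \<open>auto elim!: AE_mp\<close>)
  moreover have "integral\<^sup>L M (\<lambda>x. g x * (t x - w x)) = integral\<^sup>L M (\<lambda>x. g x * t x) - integral\<^sup>L M (\<lambda>x. g x * w x)"
    using L2_mult_integrable[OF Lg t] L2_mult_integrable[OF Lg Lw] by (simp add: right_diff_distrib)
  ultimately show ?thesis by simp
qed

lemma cell_in_domain:
  assumes \<Omega>: "lipschitz_polytope \<Omega>" and K: "open K" and Kc: "K \<subseteq> closure \<Omega>"
  shows "K \<subseteq> \<Omega>"
proof
  fix x assume xK: "x \<in> K"
  show "x \<in> \<Omega>"
  proof (rule ccontr)
    assume xO: "x \<notin> \<Omega>"
    have xm: "x \<in> closure \<Omega> - \<Omega>" using xK Kc xO by auto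
    have lip: "lipschitz_in UNIV \<Omega>" using \<Omega> by (simp add: lipschitz_polytope_def)
    have "\<forall>x \<in> closure \<Omega> - \<Omega>. \<exists>e r g L. norm e = 1 \<and> (\<forall>y\<in>UNIV. y + e \<in> UNIV) \<and> r > 0 \<and>
        L-lipschitz_on UNIV g \<and> (\<forall>y t. g (y + t *\<^sub>R e) = g y) \<and>
        \<Omega> \<inter> ball x r = {y \<in> UNIV \<inter> ball x r. y \<bullet> e < g y}"
      using lip unfolding lipschitz_in_def by (elim conjE)
    from bspec[OF this xm] obtain e r g L where e: "norm e = 1" and r: "r > 0" and g: "L-lipschitz_on UNIV g"
      and ginv: "\<forall>y t. g (y + t *\<^sub>R e) = g y"
      and loc: "\<Omega> \<inter> ball x r = {y \<in> UNIV \<inter> ball x r. y \<bullet> e < g y}"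
      by (elim exE conjE)
    have gc: "continuous_on UNIV g" using g by (rule lipschitz_on_continuous_on)
    have "x \<notin> {y \<in> UNIV \<inter> ball x r. y \<bullet> e < g y}" using loc xO by blast
    then have xge: "g x \<le> x \<bullet> e" using r by auto
    obtain \<epsilon> where \<epsilon>: "\<epsilon> > 0" "ball x \<epsilon> \<subseteq> K" using K xK open_contains_ball by blast
    define s where "s = min \<epsilon> r / 2"
    have s: "s > 0" "s < \<epsilon>" "s < r" using \<epsilon> r unfolding s_def by auto
    define y where "y = x + s *\<^sub>R e"
    have dy: "dist x y = s" using e s unfolding y_def by (simp add: dist_norm)
    have yK: "y \<in> K" using \<epsilon> s dy by (auto simp: subset_eq)
    have yr: "y \<in> ball x r" using dy s by simp
    have ycl: "y \<in> closure \<Omega>" using yK Kc by auto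
    have "y \<bullet> e \<le> g y"
    proof (rule ccontr)
      assume "\<not> y \<bullet> e \<le> g y"
      define U where "U = {z. 0 < z \<bullet> e - g z} \<inter> ball x r"
      have "open U" unfolding U_def
        by (intro open_Int open_ball open_Collect_less continuous_intros continuous_on_subset[OF gc]) auto
      moreover have "y \<in> U" using \<open>\<not> y \<bullet> e \<le> g y\<close> yr unfolding U_def by auto
      ultimately have "U \<inter> \<Omega> \<noteq> {}" using ycl open_Int_closure_eq_empty[of U \<Omega>] by blast
      then obtain z where "z \<in> \<Omega>" "z \<in> U" by blast
      then have "z \<in> \<Omega> \<inter> ball x r" "0 < z \<bullet> e - g z" unfolding U_def by auto
      then show False unfolding loc by auto
    qed
    moreover have "y \<bullet> e = x \<bullet> e + s" using e unfolding y_def by (simp add: inner_add_left dot_square_norm)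
    moreover have "g y = g x" unfolding y_def using ginv by blast
    ultimately show False using xge s by linarith
  qed
qed

lemma pd_invertible:
  fixes B :: "real^'n^'n"
  assumes "c > 0" "\<forall>\<xi>. c * (norm \<xi>)\<^sup>2 \<le> (B *v \<xi>) \<bullet> \<xi>"
  shows "invertible B"
proof -
  have "\<forall>x. B *v x = 0 \<longrightarrow> x = 0"
  proof (intro allI impI)
    fix x assume "B *v x = 0"
    then have "c * (norm x)\<^sup>2 \<le> 0" using assms(2)[rule_format, of x] by simp
    then show "x = 0" using assms(1) by (simp add: mult_le_0_iff)
  qed
  then show ?thesis unfolding invertible_left_inverse matrix_left_invertible_ker[symmetric] .
qed

lemma matrix_inv_left':
  fixes B :: "real^'n^'n"
  assumes "invertible B" shows "matrix_inv B ** B = mat 1" "B ** matrix_inv B = mat 1"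
proof -
  have "\<exists>A'. B ** A' = mat 1 \<and> A' ** B = mat 1" using assms unfolding invertible_def .
  then have "B ** matrix_inv B = mat 1 \<and> matrix_inv B ** B = mat 1"
    unfolding matrix_inv_def by (rule someI_ex)
  then show "matrix_inv B ** B = mat 1" "B ** matrix_inv B = mat 1" by auto
qed

lemma inv_mult_cancel:
  fixes B :: "real^'n^'n"
  assumes "invertible B" shows "matrix_inv B *v (B *v x) = x"
  by (simp add: matrix_vector_mul_assoc matrix_inv_left'(1)[OF assms])

lemma sym_inner:
  fixes B :: "real^'n^'n"
  assumes "transpose B = B" shows "(B *v x) \<bullet> y = (B *v y) \<bullet> x"
proof -
  have "(B *v x) \<bullet> y = x \<bullet> (transpose B *v y)"
    by (metis dot_lmul_matrix inner_commute transpose_matrix_vector)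
  then show ?thesis using assms by (simp add: inner_commute)
qed

lemma sym_inv_inner:
  fixes B :: "real^'n^'n"
  assumes "transpose B = B" "invertible B"
  shows "(matrix_inv B *v s) \<bullet> (B *v g) = s \<bullet> g"
proof -
  have "(matrix_inv B *v s) \<bullet> (B *v g) = (B *v (matrix_inv B *v s)) \<bullet> g"
    using sym_inner[OF assms(1), of g "matrix_inv B *v s"] by (simp add: inner_commute)
  also have "\<dots> = s \<bullet> g" by (simp add: matrix_vector_mul_assoc matrix_inv_left'(2)[OF assms(2)])
  finally show ?thesis .
qed

lemma AE_invertible_cell:
  assumes data: "admissible_data \<Omega> b bflat bsharp f" and KO: "K \<subseteq> \<Omega>"
    and Kl: "K \<in> sets lebesgue" and Ol: "\<Omega> \<in> sets lebesgue"
  shows "AE x in lebesgue_on K. invertible (b x) \<and> transpose (b x) = b x"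
proof -
  have "AE x in lebesgue_on \<Omega>. \<forall>\<xi>. bflat * (norm \<xi>)\<^sup>2 \<le> (b x *v \<xi>) \<bullet> \<xi> \<and> (b x *v \<xi>) \<bullet> \<xi> \<le> bsharp * (norm \<xi>)\<^sup>2"
    and pos: "bflat > 0" and sym: "\<forall>x\<in>\<Omega>. transpose (b x) = b x"
    using data unfolding admissible_data_def by auto
  then have "AE x in lebesgue. x \<in> \<Omega> \<longrightarrow> (\<forall>\<xi>. bflat * (norm \<xi>)\<^sup>2 \<le> (b x *v \<xi>) \<bullet> \<xi>)"
    using Ol by (subst (asm) AE_restrict_space_iff) (auto elim!: AE_mp)
  then have "AE x in lebesgue. x \<in> K \<longrightarrow> invertible (b x) \<and> transpose (b x) = b x"
    by (rule AE_mp, intro AE_I2) (use KO pos sym pd_invertible in blast)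
  then show ?thesis using Kl by (subst AE_restrict_space_iff) auto
qed

lemma smooth_D:
  assumes "smooth \<phi>"
  shows "\<And>x. \<phi> differentiable (at x)" "\<And>i. smooth (partial \<phi> i)"
  using assms by (auto elim: smooth.cases)

lemma partial_line_deriv:
  fixes f :: "real^'n \<Rightarrow> real"
  assumes d: "\<And>y. f differentiable (at y)"
  shows "((\<lambda>s. f (x + s *\<^sub>R axis i 1)) has_real_derivative partial f i (x + s *\<^sub>R axis i 1)) (at s)"
proof -
  let ?e = "axis i 1 :: real^'n"
  let ?y = "x + s *\<^sub>R ?e"
  have g: "((\<lambda>s. x + s *\<^sub>R ?e) has_derivative (\<lambda>h. h *\<^sub>R ?e)) (at s)"
    by (auto intro!: derivative_eq_intros)
  have fd: "(f has_derivative frechet_derivative f (at ?y)) (at ?y)"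
    using d frechet_derivative_works by blast
  have lin: "linear (frechet_derivative f (at ?y))" using has_derivative_linear[OF fd] .
  have "((f \<circ> (\<lambda>s. x + s *\<^sub>R ?e)) has_derivative (frechet_derivative f (at ?y) \<circ> (\<lambda>h. h *\<^sub>R ?e))) (at s)"
    by (rule diff_chain_at[OF g]) (simp add: fd)
  moreover have "(frechet_derivative f (at ?y) \<circ> (\<lambda>h. h *\<^sub>R ?e)) = (*) (partial f i ?y)"
    using linear_scale[OF lin] unfolding partial_def by (auto simp: fun_eq_iff)
  ultimately show ?thesis unfolding has_field_derivative_def by (simp add: o_def)
qed

lemma partial_D_zero:
  fixes \<phi> :: "real^'n \<Rightarrow> real"
  assumes "x \<notin> closure {x. \<phi> x \<noteq> 0}"
  shows "partial \<phi> i x = 0"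
proof -
  let ?U = "- closure {x. \<phi> x \<noteq> 0}"
  have "((\<lambda>_. 0) has_derivative (\<lambda>_. 0)) (at x)" by simp
  then have "(\<phi> has_derivative (\<lambda>_. 0)) (at x)"
  proof (rule has_derivative_transform_within_open[of _ _ _ _ ?U])
    show "open ?U" by (rule open_Compl) simp
    show "x \<in> ?U" using assms by simp
    fix y assume y: "y \<in> ?U"
    show "0 = \<phi> y"
    proof (rule ccontr)
      assume "0 \<noteq> \<phi> y"
      then have "y \<in> closure {x. \<phi> x \<noteq> 0}" using closure_subset by fastforce
      then show False using y by simp
    qed
  qed
  then have "frechet_derivative \<phi> (at x) = (\<lambda>_. 0)" by (simp add: frechet_derivative_at[symmetric])
  then show ?thesis unfolding partial_def by simp
qed

lemma test_fun_partial:
  assumes "test_fun K \<phi>"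
  shows "test_fun K (partial \<phi> i)"
proof -
  have sm: "smooth \<phi>" and cp: "compact (closure {x. \<phi> x \<noteq> 0})" and sub: "closure {x. \<phi> x \<noteq> 0} \<subseteq> K"
    using assms unfolding test_fun_def by auto
  have "{x. partial \<phi> i x \<noteq> 0} \<subseteq> closure {x. \<phi> x \<noteq> 0}" using partial_D_zero by blast
  then have cl: "closure {x. partial \<phi> i x \<noteq> 0} \<subseteq> closure {x. \<phi> x \<noteq> 0}"
    by (rule closure_minimal) simp
  have "compact (closure {x. partial \<phi> i x \<noteq> 0})"
    using cp cl by (meson bounded_subset closed_closure compact_eq_bounded_closed)
  then show ?thesis unfolding test_fun_def using smooth_D(2)[OF sm] cl sub by blast
qed

lemma smooth_cont: "smooth \<phi> \<Longrightarrow> continuous_on UNIV \<phi>"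
  using smooth_D(1) differentiable_imp_continuous_within continuous_at_imp_continuous_on by blast

lemma schwarz_aux:
  fixes f :: "real^'n \<Rightarrow> real"
  assumes d: "\<And>y. f differentiable (at y)" and di: "\<And>y. partial f i differentiable (at y)"
    and c: "isCont (partial (partial f i) j) x"
  shows "((\<lambda>h. (f (x + h *\<^sub>R axis i 1 + h *\<^sub>R axis j 1) - f (x + h *\<^sub>R axis i 1) - f (x + h *\<^sub>R axis j 1) + f x) / h\<^sup>2)
           \<longlongrightarrow> partial (partial f i) j x) (at_right 0)"
proof -
  let ?ei = "axis i 1 :: real^'n" and ?ej = "axis j 1 :: real^'n"
  let ?g = "partial (partial f i) j"
  let ?D = "\<lambda>h. f (x + h *\<^sub>R ?ei + h *\<^sub>R ?ej) - f (x + h *\<^sub>R ?ei) - f (x + h *\<^sub>R ?ej) + f x"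
  have key: "\<exists>y. dist y x < 2 * h \<and> ?D h / h\<^sup>2 = ?g y" if h: "h > 0" for h
  proof -
    define G where "G s = f (x + h *\<^sub>R ?ej + s *\<^sub>R ?ei) - f (x + s *\<^sub>R ?ei)" for s
    have dG: "DERIV G s :> (partial f i (x + h *\<^sub>R ?ej + s *\<^sub>R ?ei) - partial f i (x + s *\<^sub>R ?ei))" for s
      unfolding G_def by (intro derivative_intros partial_line_deriv d)
    have "\<exists>z>0. z < h \<and> G h - G 0 = (h - 0) * (\<lambda>s. partial f i (x + h *\<^sub>R ?ej + s *\<^sub>R ?ei) - partial f i (x + s *\<^sub>R ?ei)) z"
      by (rule MVT2[OF h]) (rule dG)
    then obtain \<xi> where \<xi>: "0 < \<xi>" "\<xi> < h"
      "G h - G 0 = (h - 0) * (partial f i (x + h *\<^sub>R ?ej + \<xi> *\<^sub>R ?ei) - partial f i (x + \<xi> *\<^sub>R ?ei))"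
      by auto
    define H where "H t = partial f i (x + \<xi> *\<^sub>R ?ei + t *\<^sub>R ?ej)" for t
    have dH: "DERIV H t :> ?g (x + \<xi> *\<^sub>R ?ei + t *\<^sub>R ?ej)" for t
      unfolding H_def by (rule partial_line_deriv[OF di])
    have "\<exists>z>0. z < h \<and> H h - H 0 = (h - 0) * (\<lambda>t. ?g (x + \<xi> *\<^sub>R ?ei + t *\<^sub>R ?ej)) z"
      by (rule MVT2[OF h]) (rule dH)
    then obtain \<eta> where \<eta>: "0 < \<eta>" "\<eta> < h" "H h - H 0 = (h - 0) * ?g (x + \<xi> *\<^sub>R ?ei + \<eta> *\<^sub>R ?ej)"
      by auto
    have GD: "G h - G 0 = ?D h" unfolding G_def by (simp add: algebra_simps)
    have HH: "H h - H 0 = partial f i (x + h *\<^sub>R ?ej + \<xi> *\<^sub>R ?ei) - partial f i (x + \<xi> *\<^sub>R ?ei)"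
      unfolding H_def by (simp add: algebra_simps)
    have e1: "?D h = h * (H h - H 0)" using GD HH \<xi>(3) by simp
    have e2: "H h - H 0 = h * ?g (x + \<xi> *\<^sub>R ?ei + \<eta> *\<^sub>R ?ej)" using \<eta>(3) by simp
    have Dh: "?D h = h\<^sup>2 * ?g (x + \<xi> *\<^sub>R ?ei + \<eta> *\<^sub>R ?ej)"
      unfolding e1 e2 by (simp add: power2_eq_square)
    have Dh2: "?D h / h\<^sup>2 = ?g (x + \<xi> *\<^sub>R ?ei + \<eta> *\<^sub>R ?ej)"
      unfolding Dh using h by simp
    have "dist (x + \<xi> *\<^sub>R ?ei + \<eta> *\<^sub>R ?ej) x < 2 * h"
    proof -
      have "dist (x + \<xi> *\<^sub>R ?ei + \<eta> *\<^sub>R ?ej) x = norm (\<xi> *\<^sub>R ?ei + \<eta> *\<^sub>R ?ej)"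
        by (simp add: dist_norm)
      also have "\<dots> \<le> norm (\<xi> *\<^sub>R ?ei) + norm (\<eta> *\<^sub>R ?ej)" by (rule norm_triangle_ineq)
      also have "\<dots> = \<xi> + \<eta>" using \<xi> \<eta> by simp
      finally show ?thesis using \<xi> \<eta> by simp
    qed
    then show ?thesis using Dh2 by blast
  qed
  show ?thesis
  proof (rule tendstoI)
    fix e :: real assume e: "e > 0"
    obtain \<delta> where \<delta>: "\<delta> > 0" "\<And>y. dist y x < \<delta> \<Longrightarrow> dist (?g y) (?g x) < e"
      using c e unfolding continuous_at_eps_delta by blast
    have "eventually (\<lambda>h. h \<in> {0<..<\<delta>/2}) (at_right (0::real))"
      using \<delta> by (intro eventually_at_right_real) simp
    then show "eventually (\<lambda>h. dist (?D h / h\<^sup>2) (?g x) < e) (at_right 0)"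
    proof (rule eventually_mono)
      fix h :: real assume "h \<in> {0<..<\<delta>/2}"
      then have h: "h > 0" "2 * h < \<delta>" by auto
      obtain y where "dist y x < 2 * h" "?D h / h\<^sup>2 = ?g y" using key[OF h(1)] by blast
      then show "dist (?D h / h\<^sup>2) (?g x) < e" using \<delta>(2)[of y] h by simp
    qed
  qed
qed

lemma schwarz:
  assumes "smooth \<phi>"
  shows "partial (partial \<phi> i) j x = partial (partial \<phi> j) i x"
proof -
  have d: "\<And>y. \<phi> differentiable (at y)" using smooth_D(1)[OF assms] .
  have di: "\<And>i y. partial \<phi> i differentiable (at y)" using smooth_D assms by blast
  have c: "\<And>i j. isCont (partial (partial \<phi> i) j) x"
    using smooth_cont smooth_D(2) assms by (metis continuous_on_eq_continuous_at open_UNIV UNIV_I)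
  note l1 = schwarz_aux[where f=\<phi> and i=i and j=j and x=x, OF d di c]
  note l2 = schwarz_aux[where f=\<phi> and i=j and j=i and x=x, OF d di c]
  have eq: "(\<lambda>h. (\<phi> (x + h *\<^sub>R axis j 1 + h *\<^sub>R axis i 1) - \<phi> (x + h *\<^sub>R axis j 1) - \<phi> (x + h *\<^sub>R axis i 1) + \<phi> x) / h\<^sup>2)
     = (\<lambda>h. (\<phi> (x + h *\<^sub>R axis i 1 + h *\<^sub>R axis j 1) - \<phi> (x + h *\<^sub>R axis i 1) - \<phi> (x + h *\<^sub>R axis j 1) + \<phi> x) / h\<^sup>2)"
    by (simp add: algebra_simps)
  show ?thesis using tendsto_unique[OF trivial_limit_at_right_real l1 l2[unfolded eq]] by simp
qed

lemma curl_free_grad: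
  assumes K: "lipschitz_polytope K" and wg: "weak_grad K v g" and ae: "AE x in lebesgue_on K. w x = g x"
  shows "curl_free K w"
  unfolding curl_free_def
proof (intro allI impI)
  fix \<phi> i j assume tf: "test_fun K \<phi>"
  have Kb: "bounded K" "K \<in> sets lebesgue" using cell_facts[OF K] by auto
  have sm: "smooth \<phi>" using tf test_fun_def by blast
  have cK: "complete_measure (lebesgue_on K)" by (rule complete_measure_lebesgue_on[OF Kb(2)])
  have Lg: "\<And>i. L2 (lebesgue_on K) (\<lambda>x. g x $ i)" using wg unfolding weak_grad_def L2v_def by blast
  have Lp: "\<And>i. L2 (lebesgue_on K) (partial \<phi> i)"
    by (rule L2_cont_cell[OF Kb smooth_cont[OF smooth_D(2)[OF sm]]])
  have wgr: "\<And>\<psi> i. test_fun K \<psi> \<Longrightarrow> integral\<^sup>L (lebesgue_on K) (\<lambda>x. v x * partial \<psi> i x) =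
      - integral\<^sup>L (lebesgue_on K) (\<lambda>x. g x $ i * \<psi> x)"
    using wg unfolding weak_grad_def by blast
  have "integral\<^sup>L (lebesgue_on K) (\<lambda>x. w x $ i * partial \<phi> j x - w x $ j * partial \<phi> i x) =
        integral\<^sup>L (lebesgue_on K) (\<lambda>x. g x $ i * partial \<phi> j x - g x $ j * partial \<phi> i x)"
    by (rule integral_cong_AE_complete[OF cK]) (use ae in \<open>auto elim!: AE_mp\<close>)
  also have "\<dots> = integral\<^sup>L (lebesgue_on K) (\<lambda>x. g x $ i * partial \<phi> j x) - integral\<^sup>L (lebesgue_on K) (\<lambda>x. g x $ j * partial \<phi> i x)"
    using L2_mult_integrable[OF Lg Lp] by (rule Bochner_Integration.integral_diff) (rule L2_mult_integrable[OF Lg Lp])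
  also have "integral\<^sup>L (lebesgue_on K) (\<lambda>x. g x $ i * partial \<phi> j x) = - integral\<^sup>L (lebesgue_on K) (\<lambda>x. v x * partial (partial \<phi> j) i x)"
    using wgr[OF test_fun_partial[OF tf, of j], of i] by simp
  also have "integral\<^sup>L (lebesgue_on K) (\<lambda>x. g x $ j * partial \<phi> i x) = - integral\<^sup>L (lebesgue_on K) (\<lambda>x. v x * partial (partial \<phi> i) j x)"
    using wgr[OF test_fun_partial[OF tf, of i], of j] by simp
  also have "(\<lambda>x. v x * partial (partial \<phi> i) j x) = (\<lambda>x. v x * partial (partial \<phi> j) i x)"
    using schwarz[OF sm] by simp
  finally show "integral\<^sup>L (lebesgue_on K) (\<lambda>x. w x $ i * partial \<phi> j x - w x $ j * partial \<phi> i x) = 0" by simp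
qed

lemma borel_sub_sigma:
  fixes B0 :: "'a::euclidean_space set"
  assumes "open B0" and B: "B \<in> sets borel"
  shows "B0 \<inter> B \<in> sigma_sets B0 {box a b | a b. box a b \<subseteq> B0}"
proof -
  let ?G = "{box a b | a b. box a b \<subseteq> B0}"
  define S where "S = {B. B0 \<inter> B \<in> sigma_sets B0 ?G}"
  have sa: "sigma_algebra UNIV S"
    unfolding sigma_algebra_iff2
  proof (intro conjI allI ballI impI)
    show "S \<subseteq> Pow UNIV" by simp
    show "{} \<in> S" unfolding S_def by (simp add: sigma_sets.Empty)
  next
    fix s assume "s \<in> S"
    then have "B0 \<inter> s \<in> sigma_sets B0 ?G" unfolding S_def by simp
    then have "B0 - (B0 \<inter> s) \<in> sigma_sets B0 ?G" by (rule sigma_sets.Compl)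
    moreover have "B0 - (B0 \<inter> s) = B0 \<inter> (UNIV - s)" by auto
    ultimately show "UNIV - s \<in> S" unfolding S_def by simp
  next
    fix A :: "nat \<Rightarrow> 'a set" assume "range A \<subseteq> S"
    then have "(\<Union>i. B0 \<inter> A i) \<in> sigma_sets B0 ?G" unfolding S_def by (intro sigma_sets.Union) auto
    moreover have "(\<Union>i. B0 \<inter> A i) = B0 \<inter> (\<Union>i. A i)" by auto
    ultimately show "(\<Union>i. A i) \<in> S" unfolding S_def by simp
  qed
  have op: "{S. open S} \<subseteq> S"
  proof
    fix U :: "'a set" assume "U \<in> {S. open S}"
    then have "open (B0 \<inter> U)" using assms by auto
    then obtain \<D> where D: "countable \<D>" "\<D> \<subseteq> Pow (B0 \<inter> U)" "\<And>X. X \<in> \<D> \<Longrightarrow> \<exists>a b. X = box a b" "\<Union>\<D> = B0 \<inter> U"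
      using open_countable_Union_open_box[OF \<open>open (B0 \<inter> U)\<close>] by blast
    have "\<Union>\<D> \<in> sigma_sets B0 ?G"
    proof (rule sigma_sets_UNION[OF D(1)])
      fix X assume X: "X \<in> \<D>"
      then have "X \<in> ?G" using D(2) D(3)[OF X] by blast
      then show "X \<in> sigma_sets B0 ?G" by (rule sigma_sets.Basic)
    qed
    then show "U \<in> S" using D(4) unfolding S_def by simp
  qed
  have "sigma_sets UNIV {S. open S} \<subseteq> S" by (rule sigma_algebra.sigma_sets_subset[OF sa op])
  moreover have "sets borel = sigma_sets UNIV {S :: 'a set. open S}" unfolding borel_def by simp
  ultimately show ?thesis using B unfolding S_def by auto
qed

lemma dynkin_zero:
  fixes \<delta> :: "'a::euclidean_space \<Rightarrow> real"
  assumes B0: "B0 = box a0 b0" and int: "integrable (lebesgue_on B0) \<delta>"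
    and base: "\<And>a b. box a b \<subseteq> B0 \<Longrightarrow> (LINT x:box a b|lebesgue_on B0. \<delta> x) = 0"
    and A: "A \<in> sigma_sets B0 {box a b | a b. box a b \<subseteq> B0}"
  shows "(LINT x:A|lebesgue_on B0. \<delta> x) = 0"
proof -
  let ?G = "{box a b | a b. box a b \<subseteq> B0}"
  let ?M = "lebesgue_on B0"
  have B0l: "B0 \<in> sets lebesgue" unfolding B0 by simp
  have spM: "space ?M = B0" by (simp add: space_restrict_space)
  have GM: "?G \<subseteq> sets ?M" using B0l by (auto simp: sets_restrict_space_iff)
  have sub: "sigma_sets B0 ?G \<subseteq> sets ?M"
    using sets.sigma_sets_subset[OF GM] spM by simp
  have si: "\<And>X. X \<in> sets ?M \<Longrightarrow> set_integrable ?M X \<delta>"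
    unfolding set_integrable_def by (rule integrable_mult_indicator[OF _ int])
  have ist: "Int_stable ?G"
  proof (rule Int_stableI)
    fix X Y assume "X \<in> ?G" "Y \<in> ?G"
    then obtain a b c d where XY: "X = box a b" "Y = box c d" "box a b \<subseteq> B0" by blast
    then obtain a' b' where "X \<inter> Y = box a' b'" using box_Int_box by blast
    moreover have "X \<inter> Y \<subseteq> B0" using XY by auto
    ultimately show "X \<inter> Y \<in> ?G" by blast
  qed
  have B0G: "B0 \<in> ?G" unfolding B0 by blast
  show ?thesis
  proof (rule sigma_sets_induct_disjoint[OF ist _ A, where P="\<lambda>A. (LINT x:A|?M. \<delta> x) = 0"])
    show "?G \<subseteq> Pow B0" by auto
  next
    fix X assume "X \<in> ?G"
    then obtain a b where "X = box a b" "box a b \<subseteq> B0" by blast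
    then show "(LINT x:X|?M. \<delta> x) = 0" using base by simp
  next
    show "(LINT x:{}|?M. \<delta> x) = 0" by (simp add: set_lebesgue_integral_def)
  next
    fix A assume compl: "A \<in> sigma_sets B0 ?G" "(LINT x:A|?M. \<delta> x) = 0"
    have AM: "A \<in> sets ?M" using compl(1) sub by blast
    then have AB: "A \<subseteq> B0" using sets.sets_into_space spM by blast
    have "(LINT x:A \<union> (B0 - A)|?M. \<delta> x) = (LINT x:A|?M. \<delta> x) + (LINT x:(B0 - A)|?M. \<delta> x)"
    proof (rule set_integral_Un)
      have B0M: "B0 \<in> sets ?M" using sets.top[of ?M] unfolding spM .
      show "set_integrable ?M A \<delta>" by (rule si[OF AM])
      show "set_integrable ?M (B0 - A) \<delta>" by (rule si[OF sets.Diff[OF B0M AM]])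
    qed auto
    moreover have "A \<union> (B0 - A) = B0" using AB by auto
    moreover have "(LINT x:B0|?M. \<delta> x) = 0" using base[of a0 b0] B0 by simp
    ultimately show "(LINT x:(B0 - A)|?M. \<delta> x) = 0" using compl(2) by simp
  next
    fix A :: "nat \<Rightarrow> 'a set"
    assume union: "disjoint_family A" "range A \<subseteq> sigma_sets B0 ?G" "\<And>i. (LINT x:A i|?M. \<delta> x) = 0"
    have AM: "\<And>i. A i \<in> sets ?M" using union(2) sub by blast
    have "(LINT x:(\<Union>i. A i)|?M. \<delta> x) = (\<Sum>i. (LINT x:(A i)|?M. \<delta> x))"
    proof (rule lebesgue_integral_countable_add[OF AM])
      show "\<And>i j. i \<noteq> j \<Longrightarrow> A i \<inter> A j = {}" using union(1) by (simp add: disjoint_family_on_def)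
      show "set_integrable ?M (\<Union>i. A i) \<delta>" using AM by (intro si) auto
    qed
    then show "(LINT x:(\<Union>i. A i)|?M. \<delta> x) = 0" using union(3) by simp
  qed
qed

lemma AE_zero_box:
  fixes \<delta> :: "'a::euclidean_space \<Rightarrow> real"
  assumes B0: "B0 = box a0 b0" and int: "integrable (lebesgue_on B0) \<delta>"
    and base: "\<And>a b. box a b \<subseteq> B0 \<Longrightarrow> (LINT x:box a b|lebesgue_on B0. \<delta> x) = 0"
  shows "AE x in lebesgue_on B0. \<delta> x = 0"
proof -
  let ?M = "lebesgue_on B0"
  have B0l: "B0 \<in> sets lebesgue" unfolding B0 by simp
  have "finite_measure ?M" by (rule finite_measure_lebesgue_on) (use B0 in auto)
  then interpret fm: finite_measure ?M .
  show ?thesis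
  proof (rule fm.density_zero[OF int])
  fix A assume A: "A \<in> sets ?M"
  then have AB: "A \<subseteq> B0" and Al: "A \<in> sets lebesgue" using B0l by (auto simp: sets_restrict_space_iff)
  then obtain S N N' where SN: "A = S \<union> N" "N \<subseteq> N'" "N' \<in> null_sets lborel" "S \<in> sets lborel"
    by (auto elim: sets_completionE)
  have SB: "S \<subseteq> B0" using SN AB by auto
  have Ssig: "B0 \<inter> S \<in> sigma_sets B0 {box a b | a b. box a b \<subseteq> B0}"
    by (rule borel_sub_sigma) (use B0 SN in auto)
  have h1: "(LINT x:(B0 \<inter> S)|?M. \<delta> x) = 0" by (rule dynkin_zero[OF B0 int base Ssig])
  have h2: "B0 \<inter> S = S" using SB by auto
  have h4: "(LINT x:S|?M. \<delta> x) = 0" using h1 unfolding h2 .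
  have "(LINT x:A|?M. \<delta> x) = (LINT x:S|?M. \<delta> x)"
    unfolding set_lebesgue_integral_def
  proof (rule integral_cong_AE)
    have "S \<in> sets ?M" using SB SN(4) B0l by (auto simp: sets_restrict_space_iff)
    then show "(\<lambda>x. indicator A x *\<^sub>R \<delta> x) \<in> borel_measurable ?M" "(\<lambda>x. indicator S x *\<^sub>R \<delta> x) \<in> borel_measurable ?M"
      using A int by auto
    have "N' \<in> null_sets lebesgue" using SN(3) by (rule null_sets_completionI)
    then have "AE x in lebesgue. x \<notin> N'" by (rule AE_not_in)
    then have "AE x in lebesgue. x \<in> B0 \<longrightarrow> x \<notin> N'" by (rule AE_mp) (intro AE_I2, blast)
    then have "AE x in ?M. x \<notin> N'" using AE_restrict_space_iff[of B0 lebesgue] B0l by simp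
    then show "AE x in ?M. indicator A x *\<^sub>R \<delta> x = indicator S x *\<^sub>R \<delta> x"
    proof (rule AE_mp, intro AE_I2 impI)
      fix x assume "x \<notin> N'"
      then have "(x \<in> A) = (x \<in> S)" using SN(1,2) by blast
      then show "indicator A x *\<^sub>R \<delta> x = indicator S x *\<^sub>R \<delta> x" by (simp add: indicator_def)
    qed
  qed
  then show "(LINT x:A|?M. \<delta> x) = 0" using h4 by simp
  qed
qed

lemma countable_rat_vectors: "countable {a::'a::euclidean_space. \<forall>i\<in>Basis. a \<bullet> i \<in> \<rat>}"
proof (rule countable_subset)
  show "{a::'a. \<forall>i\<in>Basis. a \<bullet> i \<in> \<rat>} \<subseteq> (\<lambda>f. \<Sum>i\<in>Basis. f i *\<^sub>R i) ` (Basis \<rightarrow>\<^sub>E \<rat>)"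
  proof
    fix a :: 'a assume a: "a \<in> {a. \<forall>i\<in>Basis. a \<bullet> i \<in> \<rat>}"
    have "a = (\<lambda>f. \<Sum>i\<in>Basis. f i *\<^sub>R i) (restrict (\<lambda>i. a \<bullet> i) Basis)"
      by (simp add: euclidean_representation)
    moreover have "restrict (\<lambda>i. a \<bullet> i) Basis \<in> Basis \<rightarrow>\<^sub>E \<rat>" using a by auto
    ultimately show "a \<in> (\<lambda>f. \<Sum>i\<in>Basis. f i *\<^sub>R i) ` (Basis \<rightarrow>\<^sub>E \<rat>)" by blast
  qed
  show "countable ((\<lambda>f. \<Sum>i\<in>Basis. f i *\<^sub>R i) ` (Basis \<rightarrow>\<^sub>E (\<rat>::real set)))"
    by (intro countable_image countable_PiE finite_Basis countable_rat)
qed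

lemma fund_boxes:
  fixes \<delta> :: "'a::euclidean_space \<Rightarrow> real"
  assumes K: "open K" and int: "integrable (lebesgue_on K) \<delta>"
    and base: "\<And>a b. closure (box a b) \<subseteq> K \<Longrightarrow> integral\<^sup>L (lebesgue_on K) (\<lambda>x. indicator (box a b) x * \<delta> x) = 0"
  shows "AE x in lebesgue_on K. \<delta> x = 0"
proof -
  have Kl: "K \<in> sets lebesgue" using K by simp
  have intK: "integrable lebesgue (\<lambda>x. indicator K x *\<^sub>R \<delta> x)"
    using int integrable_restrict_space[of K lebesgue \<delta>] Kl by simp
  have AEB: "AE x in lebesgue. x \<in> box a0 b0 \<longrightarrow> \<delta> x = 0" if cl: "closure (box a0 b0) \<subseteq> K" for a0 b0
  proof -
    define B0 where "B0 = box a0 b0"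
    have B0K: "B0 \<subseteq> K" using cl closure_subset unfolding B0_def by blast
    have B0l: "B0 \<in> sets lebesgue" unfolding B0_def by simp
    have "integrable lebesgue (\<lambda>x. indicator B0 x *\<^sub>R (indicator K x *\<^sub>R \<delta> x))"
      by (rule integrable_mult_indicator[OF B0l intK])
    moreover have "(\<lambda>x. indicator B0 x *\<^sub>R (indicator K x *\<^sub>R \<delta> x)) = (\<lambda>x. indicator B0 x *\<^sub>R \<delta> x)"
      using B0K by (auto simp: fun_eq_iff indicator_def)
    ultimately have intB0: "integrable (lebesgue_on B0) \<delta>"
      using integrable_restrict_space[of B0 lebesgue \<delta>] B0l by simp
    have base0: "(LINT x:box a b|lebesgue_on B0. \<delta> x) = 0" if ab: "box a b \<subseteq> B0" for a b
    proof -
      have "(LINT x:box a b|lebesgue_on B0. \<delta> x) =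
          integral\<^sup>L lebesgue (\<lambda>x. indicator B0 x *\<^sub>R (indicator (box a b) x *\<^sub>R \<delta> x))"
        unfolding set_lebesgue_integral_def using B0l by (simp add: integral_restrict_space)
      also have "\<dots> = integral\<^sup>L lebesgue (\<lambda>x. indicator K x *\<^sub>R (indicator (box a b) x *\<^sub>R \<delta> x))"
        using ab B0K by (intro arg_cong[where f="integral\<^sup>L lebesgue"]) (auto simp: fun_eq_iff indicator_def)
      also have "\<dots> = integral\<^sup>L (lebesgue_on K) (\<lambda>x. indicator (box a b) x * \<delta> x)"
        using Kl by (simp add: integral_restrict_space)
      also have "\<dots> = 0"
      proof (rule base)
        have "closure (box a b) \<subseteq> closure B0" using ab by (rule closure_mono)
        then show "closure (box a b) \<subseteq> K" using cl unfolding B0_def by blast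
      qed
      finally show ?thesis .
    qed
    have "AE x in lebesgue_on B0. \<delta> x = 0" by (rule AE_zero_box[OF B0_def intB0 base0])
    then show ?thesis using AE_restrict_space_iff[of B0 lebesgue] B0l unfolding B0_def by simp
  qed
  define Q where "Q = {a::'a. \<forall>i\<in>Basis. a \<bullet> i \<in> \<rat>}"
  define \<B> where "\<B> = {p \<in> Q \<times> Q. closure (box (fst p) (snd p)) \<subseteq> K}"
  have cB: "countable \<B>"
    by (rule countable_subset[of _ "Q \<times> Q"]) (auto simp: \<B>_def Q_def intro: countable_rat_vectors)
  have "AE x in lebesgue. \<forall>p\<in>\<B>. x \<in> box (fst p) (snd p) \<longrightarrow> \<delta> x = 0"
    using cB AEB unfolding \<B>_def by (subst AE_ball_countable) auto
  then have "AE x in lebesgue. x \<in> K \<longrightarrow> \<delta> x = 0"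
  proof (rule AE_mp, intro AE_I2 impI)
    fix x assume H: "\<forall>p\<in>\<B>. x \<in> box (fst p) (snd p) \<longrightarrow> \<delta> x = 0" and xK: "x \<in> K"
    obtain e where e: "e > 0" "ball x e \<subseteq> K" using K xK open_contains_ball by blast
    obtain a b where ab: "\<forall>i\<in>Basis. a \<bullet> i \<in> \<rat> \<and> b \<bullet> i \<in> \<rat>" "x \<in> box a b" "box a b \<subseteq> ball x (e/2)"
      using rational_boxes[of "e/2" x] e by auto
    have "closure (box a b) \<subseteq> closure (ball x (e/2))" using ab(3) by (rule closure_mono)
    also have "\<dots> = cball x (e/2)" using e by simp
    also have "\<dots> \<subseteq> ball x e" using e by (auto simp: subset_eq)
    finally have "closure (box a b) \<subseteq> K" using e by blast
    then have "(a, b) \<in> \<B>" using ab unfolding \<B>_def Q_def by auto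
    then show "\<delta> x = 0" using H[rule_format, of "(a, b)"] ab(2) by simp
  qed
  then show ?thesis using AE_restrict_space_iff[of K lebesgue] Kl by simp
qed

coinductive smooth1 :: "(real \<Rightarrow> real) \<Rightarrow> bool" where
  "(\<forall>s. h differentiable (at s)) \<Longrightarrow> smooth1 (deriv h) \<Longrightarrow> smooth1 h"

lemma smooth1_D: "smooth1 h \<Longrightarrow> (\<forall>s. h differentiable (at s)) \<and> smooth1 (deriv h)"
  by (auto elim: smooth1.cases)

lemma smooth1_affine:
  assumes "smooth1 k" shows "smooth1 (\<lambda>s. c * k (\<alpha> * s + \<beta>))"
proof -
  define X where "X h \<longleftrightarrow> (\<exists>k c \<alpha> \<beta>. smooth1 k \<and> h = (\<lambda>s. c * k (\<alpha> * s + \<beta>)))" for h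
  have "X (\<lambda>s. c * k (\<alpha> * s + \<beta>))" unfolding X_def using assms by blast
  then show ?thesis
  proof (rule smooth1.coinduct[where X=X])
    fix h assume "X h"
    then obtain k c \<alpha> \<beta> where k: "smooth1 k" and h: "h = (\<lambda>s. c * k (\<alpha> * s + \<beta>))" unfolding X_def by blast
    have kd: "\<And>y. DERIV k y :> deriv k y" using smooth1_D[OF k] DERIV_deriv_iff_real_differentiable by blast
    have hd: "DERIV h s :> (c * \<alpha>) * deriv k (\<alpha> * s + \<beta>)" for s
    proof -
      have "DERIV (\<lambda>s. \<alpha> * s + \<beta>) s :> \<alpha>" by (auto intro!: derivative_eq_intros)
      from DERIV_chain2[OF kd this] have "DERIV (\<lambda>s. k (\<alpha> * s + \<beta>)) s :> deriv k (\<alpha> * s + \<beta>) * \<alpha>" .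
      then have "DERIV (\<lambda>s. c * k (\<alpha> * s + \<beta>)) s :> c * (deriv k (\<alpha> * s + \<beta>) * \<alpha>)" by (rule DERIV_cmult)
      then show ?thesis unfolding h by (simp add: algebra_simps)
    qed
    have "deriv h = (\<lambda>s. (c * \<alpha>) * deriv k (\<alpha> * s + \<beta>))" using hd by (auto intro: DERIV_imp_deriv)
    moreover have "smooth1 (deriv k)" using smooth1_D[OF k] by blast
    ultimately have "X (deriv h)" unfolding X_def by blast
    moreover have "\<forall>s. h differentiable (at s)" using hd real_differentiable_def by blast
    ultimately show "\<exists>h'. h = h' \<and> (\<forall>s. h' differentiable (at s)) \<and> (X (deriv h') \<or> smooth1 (deriv h'))" by blast
  qed
qed

lemma poly_div_exp_tendsto: "((\<lambda>y. poly r y / exp y) \<longlongrightarrow> (0::real)) at_top"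
proof -
  have "((\<lambda>y. \<Sum>i\<le>degree r. coeff r i * (y ^ i / exp y)) \<longlongrightarrow> (0::real)) at_top"
    by (intro tendsto_null_sum tendsto_mult_right_zero tendsto_power_div_exp_0)
  moreover have "(\<lambda>y. \<Sum>i\<le>degree r. coeff r i * (y ^ i / exp y)) = (\<lambda>y. poly r y / exp y)"
    by (auto simp: poly_altdef sum_divide_distrib fun_eq_iff)
  ultimately show ?thesis by simp
qed

lemma key_lim: "((\<lambda>t. poly p (1/t) * exp (-1/t) / t) \<longlongrightarrow> (0::real)) (at_right 0)"
proof -
  let ?r = "p * [:0, 1:]"
  have "((\<lambda>t. poly ?r (inverse t) / exp (inverse t)) \<longlongrightarrow> (0::real)) (at_right 0)"
    by (rule filterlim_compose[OF poly_div_exp_tendsto filterlim_inverse_at_top_right])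
  moreover have "eventually (\<lambda>t. poly ?r (inverse t) / exp (inverse t) = poly p (1/t) * exp (-1/t) / t) (at_right (0::real))"
  proof (rule eventually_mono[OF eventually_at_right_real[OF zero_less_one]])
    fix t :: real assume "t \<in> {0<..<1}"
    then show "poly ?r (inverse t) / exp (inverse t) = poly p (1/t) * exp (-1/t) / t"
      by (simp add: exp_minus field_simps)
  qed
  ultimately show ?thesis by (rule Lim_transform_eventually)
qed

definition bG :: "real \<Rightarrow> real" where "bG s = (if s > 0 then exp (-1/s) else 0)"

lemma smooth1_bG: "smooth1 bG"
proof -
  define X where "X h \<longleftrightarrow> (\<exists>p::real poly. h = (\<lambda>s. if s > 0 then poly p (1/s) * exp (-1/s) else 0))" for h
  have "X bG" unfolding X_def bG_def by (rule exI[of _ 1]) (simp add: fun_eq_iff)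
  then show ?thesis
  proof (rule smooth1.coinduct[where X=X])
    fix h assume "X h"
    then obtain p :: "real poly" where h: "h = (\<lambda>s. if s > 0 then poly p (1/s) * exp (-1/s) else 0)"
      unfolding X_def by blast
    define q where "q = [:0, 0, 1:] * (p - pderiv p)"
    define dh where "dh = (\<lambda>s. if s > 0 then poly q (1/s) * exp (-1/s) else (0::real))"
    have hd: "DERIV h s :> dh s" for s
    proof (cases "s > 0")
      case True
      have "DERIV (\<lambda>t. poly p (1/t) * exp (-1/t)) s :>
          poly (pderiv p) (1/s) * (- 1 / s\<^sup>2) * exp (-1/s) + poly p (1/s) * (exp (-1/s) * (1 / s\<^sup>2))"
        using True by (auto intro!: derivative_eq_intros DERIV_chain2[OF poly_DERIV] simp: power2_eq_square)
      moreover have "poly (pderiv p) (1/s) * (- 1 / s\<^sup>2) * exp (-1/s) + poly p (1/s) * (exp (-1/s) * (1 / s\<^sup>2)) = dh s"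
        using True unfolding dh_def q_def by (simp add: field_simps power2_eq_square)
      ultimately have "DERIV (\<lambda>t. poly p (1/t) * exp (-1/t)) s :> dh s" by simp
      then show ?thesis
        by (rule has_field_derivative_transform_within_open[where S="{0<..}"]) (use True h in auto)
    next
      case False
      show ?thesis
      proof (cases "s < 0")
        case True
        have "DERIV (\<lambda>t. 0::real) s :> 0" by simp
        then have "DERIV h s :> 0"
          by (rule has_field_derivative_transform_within_open[where S="{..<0}"]) (use True h in auto)
        then show ?thesis using True unfolding dh_def by simp
      next
        case False
        then have s0: "s = 0" using \<open>\<not> s > 0\<close> by simp
        have "((\<lambda>t. (h (0 + t) - h 0) / t) \<longlongrightarrow> 0) (at 0)"
          unfolding filterlim_at_split
        proof
          show "((\<lambda>t. (h (0 + t) - h 0) / t) \<longlongrightarrow> 0) (at_left 0)"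
          proof (rule Lim_transform_eventually[rotated])
            show "eventually (\<lambda>t. 0 = (h (0 + t) - h 0) / t) (at_left (0::real))"
            proof -
              have "eventually (\<lambda>t. t \<in> {-1<..<0}) (at_left (0::real))" by (rule eventually_at_left_real) simp
              then show ?thesis by (rule eventually_mono) (auto simp: h)
            qed
          qed simp
          show "((\<lambda>t. (h (0 + t) - h 0) / t) \<longlongrightarrow> 0) (at_right 0)"
          proof (rule Lim_transform_eventually[rotated])
            show "eventually (\<lambda>t. poly p (1/t) * exp (-1/t) / t = (h (0 + t) - h 0) / t) (at_right (0::real))"
              by (rule eventually_mono[OF eventually_at_right_real[OF zero_less_one]]) (auto simp: h)
          qed (rule key_lim)
        qed
        then have "DERIV h 0 :> 0" unfolding DERIV_def .
        then show ?thesis using s0 unfolding dh_def by simp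
      qed
    qed
    have "deriv h = dh" using hd by (auto intro: DERIV_imp_deriv)
    then have "X (deriv h)" unfolding X_def dh_def by blast
    moreover have "\<forall>s. h differentiable (at s)" using hd real_differentiable_def by blast
    ultimately show "\<exists>h'. h = h' \<and> (\<forall>s. h' differentiable (at s)) \<and> (X (deriv h') \<or> smooth1 (deriv h'))" by blast
  qed
qed

definition PP :: "(('n::finite \<times> bool) \<Rightarrow> real \<Rightarrow> real) \<Rightarrow> real^'n \<Rightarrow> real" where
  "PP H x = (\<Prod>c\<in>UNIV. H c (x $ fst c))"

definition PPd :: "(('n::finite \<times> bool) \<Rightarrow> real \<Rightarrow> real) \<Rightarrow> real^'n \<Rightarrow> real^'n \<Rightarrow> real" where
  "PPd H x d = (\<Sum>c\<in>UNIV. (deriv (H c) (x $ fst c) * d $ fst c) * (\<Prod>c'\<in>UNIV - {c}. H c' (x $ fst c')))"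

lemma PP_has_derivative:
  fixes H :: "('n::finite \<times> bool) \<Rightarrow> real \<Rightarrow> real" and x :: "real^'n"
  assumes d: "\<And>c s. H c differentiable (at s)"
  shows "(PP H has_derivative PPd H x) (at x)"
proof -
  have f: "((\<lambda>x. H c (x $ fst c)) has_derivative (\<lambda>d. deriv (H c) (x $ fst c) * d $ fst c)) (at x)" for c
  proof -
    have l: "((\<lambda>x::real^'n. x $ fst c) has_derivative (\<lambda>d. d $ fst c)) (at x)"
      by (rule bounded_linear_imp_has_derivative[OF bounded_linear_vec_nth])
    have "(H c has_derivative (*) (deriv (H c) (x $ fst c))) (at (x $ fst c))"
      using d DERIV_deriv_iff_real_differentiable has_field_derivative_def by blast
    from diff_chain_at[OF l this] show ?thesis by (simp add: o_def)
  qed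
  show ?thesis unfolding PP_def PPd_def
    by (rule has_derivative_eq_rhs[OF has_derivative_prod[OF f]]) (simp add: fun_eq_iff)
qed

lemma PP_upd:
  fixes H :: "('n::finite \<times> bool) \<Rightarrow> real \<Rightarrow> real" and x :: "real^'n"
  shows "PP (H(c := D)) x = D (x $ fst c) * (\<Prod>c'\<in>UNIV - {c}. H c' (x $ fst c'))"
  unfolding PP_def by (subst prod.remove[of UNIV c]) (auto intro!: prod.cong)

lemma PPd_axis:
  fixes H :: "('n::finite \<times> bool) \<Rightarrow> real \<Rightarrow> real" and x :: "real^'n"
  shows "PPd H x (axis j 1) = PP (H((j, True) := deriv (H (j, True)))) x + PP (H((j, False) := deriv (H (j, False)))) x"
proof -
  have "PPd H x (axis j 1) = (\<Sum>c\<in>UNIV. if fst c = j then deriv (H c) (x $ fst c) * (\<Prod>c'\<in>UNIV - {c}. H c' (x $ fst c')) else 0)"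
    unfolding PPd_def by (rule sum.cong) (auto simp: axis_def)
  also have "\<dots> = (\<Sum>c\<in>{c. fst c = j}. deriv (H c) (x $ fst c) * (\<Prod>c'\<in>UNIV - {c}. H c' (x $ fst c')))"
    by (simp add: sum.If_cases Int_def)
  also have "{c. fst c = j} = {(j, True), (j, False)}" by auto
  also have "(\<Sum>c\<in>{(j, True), (j, False)}. deriv (H c) (x $ fst c) * (\<Prod>c'\<in>UNIV - {c}. H c' (x $ fst c'))) =
      PP (H((j, True) := deriv (H (j, True)))) x + PP (H((j, False) := deriv (H (j, False)))) x"
    by (simp add: PP_upd)
  finally show ?thesis .
qed

definition Dj :: "'n \<Rightarrow> (('n \<times> bool) \<Rightarrow> real \<Rightarrow> real) list \<Rightarrow> (('n \<times> bool) \<Rightarrow> real \<Rightarrow> real) list" where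
  "Dj j Hs = concat (map (\<lambda>H. [H((j, True) := deriv (H (j, True))), H((j, False) := deriv (H (j, False)))]) Hs)"

lemma SP_has_derivative:
  fixes Hs :: "(('n::finite \<times> bool) \<Rightarrow> real \<Rightarrow> real) list" and x :: "real^'n"
  assumes "\<forall>H\<in>set Hs. \<forall>c s. H c differentiable (at s)"
  shows "((\<lambda>x. \<Sum>H\<leftarrow>Hs. PP H x) has_derivative (\<lambda>d. \<Sum>H\<leftarrow>Hs. PPd H x d)) (at x)"
  using assms
proof (induction Hs)
  case Nil then show ?case by simp
next
  case (Cons H Hs)
  have "(PP H has_derivative PPd H x) (at x)" using Cons.prems by (intro PP_has_derivative) auto
  then show ?case using Cons by (auto intro!: has_derivative_add)
qed

lemma SP_sum_Dj:
  fixes Hs :: "(('n::finite \<times> bool) \<Rightarrow> real \<Rightarrow> real) list" and x :: "real^'n"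
  shows "(\<Sum>H\<leftarrow>Hs. PPd H x (axis j 1)) = (\<Sum>H\<leftarrow>Dj j Hs. PP H x)"
  by (induction Hs) (auto simp: Dj_def PPd_axis)

lemma smooth_SP:
  assumes "\<forall>H\<in>set Hs. \<forall>c. smooth1 (H c)"
  shows "smooth (\<lambda>x::real^'n::finite. \<Sum>H\<leftarrow>Hs. PP H x)"
proof -
  define X where "X \<phi> \<longleftrightarrow> (\<exists>Hs. (\<forall>H\<in>set Hs. \<forall>c. smooth1 (H c)) \<and> \<phi> = (\<lambda>x::real^'n. \<Sum>H\<leftarrow>Hs. PP H x))" for \<phi>
  have "X (\<lambda>x. \<Sum>H\<leftarrow>Hs. PP H x)" unfolding X_def using assms by blast
  then show ?thesis
  proof (rule smooth.coinduct[where X=X])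
    fix \<phi> assume "X \<phi>"
    then obtain Hs where Hs: "\<forall>H\<in>set Hs. \<forall>c. smooth1 (H c)" and \<phi>: "\<phi> = (\<lambda>x. \<Sum>H\<leftarrow>Hs. PP H x)"
      unfolding X_def by blast
    have dH: "\<forall>H\<in>set Hs. \<forall>c s. H c differentiable (at s)" using Hs smooth1_D by blast
    have der: "(\<phi> has_derivative (\<lambda>d. \<Sum>H\<leftarrow>Hs. PPd H x d)) (at x)" for x
      unfolding \<phi> by (rule SP_has_derivative[OF dH])
    have "partial \<phi> j x = (\<Sum>H\<leftarrow>Dj j Hs. PP H x)" for j x
      unfolding partial_def using frechet_derivative_at[OF der[of x]] SP_sum_Dj by metis
    then have "partial \<phi> j = (\<lambda>x. \<Sum>H\<leftarrow>Dj j Hs. PP H x)" for j by auto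
    moreover have "\<forall>H\<in>set (Dj j Hs). \<forall>c. smooth1 (H c)" for j
      using Hs smooth1_D unfolding Dj_def by auto
    ultimately have "X (partial \<phi> j)" for j unfolding X_def by blast
    moreover have "\<phi> differentiable (at x)" for x using der differentiableI by blast
    ultimately show "\<exists>\<phi>'. \<phi> = \<phi>' \<and> (\<forall>x. \<phi>' differentiable (at x)) \<and> (\<forall>i. X (partial \<phi>' i) \<or> smooth (partial \<phi>' i))"
      by blast
  qed
qed

definition Hb :: "real \<Rightarrow> real^'n \<Rightarrow> real^'n \<Rightarrow> ('n::finite \<times> bool) \<Rightarrow> real \<Rightarrow> real" where
  "Hb m a b c = (if snd c then (\<lambda>s. 1 * bG (m * s + (- m * a $ fst c))) else (\<lambda>s. 1 * bG ((- m) * s + m * b $ fst c)))"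

definition bump :: "real \<Rightarrow> real^'n \<Rightarrow> real^'n \<Rightarrow> real^'n::finite \<Rightarrow> real" where
  "bump m a b = PP (Hb m a b)"

lemma smooth_bump: "smooth (bump m a b)"
proof -
  have sc: "smooth1 (Hb m a b c)" for c
  proof (cases "snd c")
    case True then show ?thesis unfolding Hb_def using smooth1_affine[OF smooth1_bG, of 1 m "- m * a $ fst c"] by simp
  next
    case False then show ?thesis unfolding Hb_def using smooth1_affine[OF smooth1_bG, of 1 "- m" "m * b $ fst c"] by simp
  qed
  have "\<forall>H\<in>set [Hb m a b]. \<forall>c. smooth1 (H c)" using sc by simp
  from smooth_SP[OF this] show ?thesis unfolding bump_def by simp
qed

lemma bG_nonneg: "0 \<le> bG t" unfolding bG_def by simp
lemma bG_le1: "bG t \<le> 1" unfolding bG_def by auto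
lemma bG_nz: "bG t \<noteq> 0 \<longleftrightarrow> t > 0" unfolding bG_def by auto

lemma Hb_simps:
  "Hb m a b (i, True) s = bG (m * (s - a $ i))" "Hb m a b (i, False) s = bG (m * (b $ i - s))"
  unfolding Hb_def by (simp_all add: algebra_simps)

lemma bump_nz:
  fixes a b x :: "real^'n::finite"
  assumes m: "m > 0" shows "bump m a b x \<noteq> 0 \<longleftrightarrow> x \<in> box a b"
proof -
  have "bump m a b x \<noteq> 0 \<longleftrightarrow> (\<forall>c. Hb m a b c (x $ fst c) \<noteq> 0)"
    unfolding bump_def PP_def by simp
  also have "\<dots> \<longleftrightarrow> (\<forall>i. Hb m a b (i, True) (x $ i) \<noteq> 0 \<and> Hb m a b (i, False) (x $ i) \<noteq> 0)"
  proof
    assume "\<forall>c. Hb m a b c (x $ fst c) \<noteq> 0"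
    then show "\<forall>i. Hb m a b (i, True) (x $ i) \<noteq> 0 \<and> Hb m a b (i, False) (x $ i) \<noteq> 0"
      by (metis fst_conv)
  next
    assume H: "\<forall>i. Hb m a b (i, True) (x $ i) \<noteq> 0 \<and> Hb m a b (i, False) (x $ i) \<noteq> 0"
    show "\<forall>c. Hb m a b c (x $ fst c) \<noteq> 0"
    proof
      fix c :: "'n \<times> bool"
      obtain i bb where c: "c = (i, bb)" by (cases c)
      show "Hb m a b c (x $ fst c) \<noteq> 0" using H unfolding c by (cases bb) auto
    qed
  qed
  also have "\<dots> \<longleftrightarrow> (\<forall>i. a $ i < x $ i \<and> x $ i < b $ i)"
    using m by (simp add: Hb_simps bG_nz zero_less_mult_iff)
  also have "\<dots> \<longleftrightarrow> x \<in> box a b" by (simp add: mem_box_cart)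
  finally show ?thesis .
qed

lemma bump_bounds: "0 \<le> bump m a b x" "bump m a b x \<le> 1"
  unfolding bump_def PP_def Hb_def
  by (auto intro!: prod_nonneg prod_le_1 bG_nonneg bG_le1)

lemma bG_lim: assumes "t > 0" shows "(\<lambda>n. bG (real (Suc n) * t)) \<longlonglongrightarrow> 1"
proof -
  have "(\<lambda>n. exp (- inverse t * inverse (real (Suc n)))) \<longlonglongrightarrow> exp (- inverse t * 0)"
    by (intro tendsto_intros LIMSEQ_inverse_real_of_nat)
  moreover have "bG (real (Suc n) * t) = exp (- inverse t * inverse (real (Suc n)))" for n
  proof -
    have pos: "0 < real (Suc n) * t" using assms by simp
    then show ?thesis unfolding bG_def using assms by (simp add: field_simps)
  qed
  ultimately show ?thesis by simp
qed

lemma bump_lim: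
  fixes a b x :: "real^'n::finite"
  shows "(\<lambda>n. bump (real (Suc n)) a b x) \<longlonglongrightarrow> indicator (box a b) x"
proof (cases "x \<in> box a b")
  case True
  then have ab: "\<And>i. a $ i < x $ i \<and> x $ i < b $ i" by (simp add: mem_box_cart)
  have "(\<lambda>n. Hb (real (Suc n)) a b c (x $ fst c)) \<longlonglongrightarrow> 1" for c
  proof (cases c)
    case (Pair i bb)
    show ?thesis
    proof (cases bb)
      case True
      then show ?thesis using Pair bG_lim[of "x $ i - a $ i"] ab[of i] by (simp add: Hb_simps)
    next
      case False
      then show ?thesis using Pair bG_lim[of "b $ i - x $ i"] ab[of i] by (simp add: Hb_simps)
    qed
  qed
  then have "(\<lambda>n. \<Prod>c\<in>UNIV. Hb (real (Suc n)) a b c (x $ fst c)) \<longlonglongrightarrow> (\<Prod>c\<in>(UNIV::('n \<times> bool) set). 1)"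
    by (intro tendsto_prod)
  then show ?thesis using True unfolding bump_def PP_def by simp
next
  case False
  then have "bump (real (Suc n)) a b x = 0" for n using bump_nz[of "real (Suc n)" a b x] by auto
  then show ?thesis using False by simp
qed

lemma test_fun_bump:
  assumes "m > 0" "closure (box a b) \<subseteq> K"
  shows "test_fun K (bump m a b)"
proof -
  have "{x. bump m a b x \<noteq> 0} = box a b" using bump_nz[OF assms(1)] by auto
  then show ?thesis unfolding test_fun_def using smooth_bump assms(2)
    by (simp add: compact_closure bounded_box)
qed

lemma borel_lebesgue_on:
  fixes g :: "'a::euclidean_space \<Rightarrow> real"
  shows "g \<in> borel_measurable borel \<Longrightarrow> g \<in> borel_measurable (lebesgue_on K)"
  by (rule measurable_restrict_space1, rule measurable_completion)
     (simp add: measurable_cong_sets[OF sets_lborel refl])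

lemma box_base:
  fixes \<delta> :: "real^'n::finite \<Rightarrow> real"
  assumes int: "integrable (lebesgue_on K) \<delta>"
    and tf: "\<And>\<phi>. test_fun K \<phi> \<Longrightarrow> integral\<^sup>L (lebesgue_on K) (\<lambda>x. \<delta> x * \<phi> x) = 0"
    and cl: "closure (box a b) \<subseteq> K"
  shows "integral\<^sup>L (lebesgue_on K) (\<lambda>x. indicator (box a b) x * \<delta> x) = 0"
proof -
  let ?M = "lebesgue_on K"
  let ?s = "\<lambda>n x. \<delta> x * bump (real (Suc n)) a b x"
  have dm: "\<delta> \<in> borel_measurable ?M" using int by simp
  have "(\<lambda>n. integral\<^sup>L ?M (?s n)) \<longlonglongrightarrow> integral\<^sup>L ?M (\<lambda>x. \<delta> x * indicator (box a b) x)"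
  proof (rule integral_dominated_convergence[where w="\<lambda>x. \<bar>\<delta> x\<bar>"])
    have "(indicator (box a b) :: real^'n \<Rightarrow> real) \<in> borel_measurable ?M"
      by (rule borel_lebesgue_on) simp
    then show "(\<lambda>x. \<delta> x * indicator (box a b) x) \<in> borel_measurable ?M" using dm by simp
    fix n
    have "bump (real (Suc n)) a b \<in> borel_measurable ?M"
      by (rule borel_lebesgue_on, rule borel_measurable_continuous_onI, rule smooth_cont[OF smooth_bump])
    then show "?s n \<in> borel_measurable ?M" using dm by simp
    show "AE x in ?M. norm (?s n x) \<le> \<bar>\<delta> x\<bar>"
    proof (rule AE_I2)
      fix x
      have "\<bar>bump (real (Suc n)) a b x\<bar> \<le> 1" using bump_bounds[of "real (Suc n)" a b x] by simp
      then show "norm (?s n x) \<le> \<bar>\<delta> x\<bar>"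
        by (simp add: abs_mult mult_left_le)
    qed
  next
    show "integrable ?M (\<lambda>x. \<bar>\<delta> x\<bar>)" using int by simp
    show "AE x in ?M. (\<lambda>n. ?s n x) \<longlonglongrightarrow> \<delta> x * indicator (box a b) x"
      by (rule AE_I2) (intro tendsto_mult tendsto_const bump_lim)
  qed
  moreover have "integral\<^sup>L ?M (?s n) = 0" for n
    by (rule tf[OF test_fun_bump]) (use cl in auto)
  ultimately have "(\<lambda>n. 0) \<longlonglongrightarrow> integral\<^sup>L ?M (\<lambda>x. \<delta> x * indicator (box a b) x)" by simp
  then have "integral\<^sup>L ?M (\<lambda>x. \<delta> x * indicator (box a b) x) = 0" using LIMSEQ_unique tendsto_const by blast
  then show ?thesis by (simp add: mult.commute)
qed

lemma fundamental:
  fixes \<delta> :: "real^'n::finite \<Rightarrow> real"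
  assumes K: "open K" and int: "integrable (lebesgue_on K) \<delta>"
    and tf: "\<And>\<phi>. test_fun K \<phi> \<Longrightarrow> integral\<^sup>L (lebesgue_on K) (\<lambda>x. \<delta> x * \<phi> x) = 0"
  shows "AE x in lebesgue_on K. \<delta> x = 0"
  by (rule fund_boxes[OF K int box_base[OF int tf]])

lemma weak_grad_unique:
  assumes K: "lipschitz_polytope K" and g1: "weak_grad K v g1" and g2: "weak_grad K v g2"
  shows "AE x in lebesgue_on K. g1 x = g2 x"
proof -
  have Kf: "open K" "bounded K" "K \<in> sets lebesgue" using cell_facts[OF K] by auto
  have Li: "L2 (lebesgue_on K) (\<lambda>x. g x $ i)" if "weak_grad K v g" for g i
    using that unfolding weak_grad_def L2v_def by blast
  have one: "L2 (lebesgue_on K) (\<lambda>x. 1)" by (rule L2_cont_cell[OF Kf(2,3)]) simp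
  have comp: "AE x in lebesgue_on K. g1 x $ i - g2 x $ i = 0" for i
  proof (rule fundamental[OF Kf(1)])
    have "L2 (lebesgue_on K) (\<lambda>x. g1 x $ i - g2 x $ i)" by (intro L2_diff Li g1 g2)
    from L2_mult_integrable[OF this one] show "integrable (lebesgue_on K) (\<lambda>x. g1 x $ i - g2 x $ i)" by simp
    fix \<phi> assume tf: "test_fun K \<phi>"
    have Lp: "L2 (lebesgue_on K) \<phi>"
      using tf unfolding test_fun_def by (intro L2_cont_cell[OF Kf(2,3) smooth_cont]) auto
    have "integral\<^sup>L (lebesgue_on K) (\<lambda>x. (g1 x $ i - g2 x $ i) * \<phi> x) =
        integral\<^sup>L (lebesgue_on K) (\<lambda>x. g1 x $ i * \<phi> x) - integral\<^sup>L (lebesgue_on K) (\<lambda>x. g2 x $ i * \<phi> x)"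
      using L2_mult_integrable[OF Li[OF g1] Lp] L2_mult_integrable[OF Li[OF g2] Lp]
      by (simp add: left_diff_distrib)
    also have "\<dots> = 0"
    proof -
      have w1: "integral\<^sup>L (lebesgue_on K) (\<lambda>x. v x * partial \<phi> i x) = - integral\<^sup>L (lebesgue_on K) (\<lambda>x. g1 x $ i * \<phi> x)"
        using g1 tf unfolding weak_grad_def by blast
      have w2: "integral\<^sup>L (lebesgue_on K) (\<lambda>x. v x * partial \<phi> i x) = - integral\<^sup>L (lebesgue_on K) (\<lambda>x. g2 x $ i * \<phi> x)"
        using g2 tf unfolding weak_grad_def by blast
      show ?thesis using w1 w2 by linarith
    qed
    finally show "integral\<^sup>L (lebesgue_on K) (\<lambda>x. (g1 x $ i - g2 x $ i) * \<phi> x) = 0" .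
  qed
  have "AE x in lebesgue_on K. \<forall>i. g1 x $ i - g2 x $ i = 0"
    using comp by (subst AE_all_countable) auto
  then show ?thesis by (rule AE_mp) (auto simp: vec_eq_iff)
qed

lemma choice3:
  assumes "\<forall>x\<in>S. \<exists>a b c. P x a b c"
  shows "\<exists>A B C. \<forall>x\<in>S. P x (A x) (B x) (C x)"
proof -
  have "\<forall>x\<in>S. \<exists>t. P x (fst t) (fst (snd t)) (snd (snd t))" using assms by auto
  then obtain f where f: "\<forall>x\<in>S. P x (fst (f x)) (fst (snd (f x))) (snd (snd (f x)))" by (metis bchoice)
  show ?thesis
    apply (rule exI[of _ "\<lambda>x. fst (f x)"]) apply (rule exI[of _ "\<lambda>x. fst (snd (f x))"])
    apply (rule exI[of _ "\<lambda>x. snd (snd (f x))"]) using f by simp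
qed

lemma choice2:
  assumes "\<forall>x\<in>S. \<exists>a b. P x a b"
  shows "\<exists>A B. \<forall>x\<in>S. P x (A x) (B x)"
proof -
  have "\<forall>x\<in>S. \<exists>t. P x (fst t) (snd t)" using assms by auto
  then obtain f where f: "\<forall>x\<in>S. P x (fst (f x)) (snd (f x))" by (metis bchoice)
  show ?thesis
    apply (rule exI[of _ "\<lambda>x. fst (f x)"]) apply (rule exI[of _ "\<lambda>x. snd (f x)"]) using f by simp
qed

theorem mainTheorem6:
  fixes \<Omega> :: "(real^'n) set" and \<K> \<F> :: "(real^'n) set set"
    and nF :: "(real^'n) set \<Rightarrow> real^'n"
    and b :: "real^'n \<Rightarrow> real^'n^'n" and bflat bsharp :: real and f :: "real^'n \<Rightarrow> real"
    and l k :: nat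
    and \<sigma> :: "(real^'n) set \<Rightarrow> real^'n \<Rightarrow> real^'n"
    and u uB ut :: "(real^'n) set \<Rightarrow> real^'n \<Rightarrow> real"
  assumes mesh: "admissible_mesh \<Omega> \<K> \<F> nF"
    and data: "admissible_data \<Omega> b bflat bsharp f"
    and l: "l \<ge> 1" and k: "k \<ge> 1"
    and sol: "dHM \<K> \<F> nF b f l k \<sigma> u uB"
    and ut_V0: "V0 \<K> \<F> nF b l k ut"
    and ut_cell: "\<forall>K\<in>\<K>. l2proj (lebesgue_on K) (l - 1) (ut K) (u K)"
    and ut_bdry: "\<exists>t. \<forall>K\<in>\<K>. is_trace \<F> K (ut K) (t K) \<and>
                     (\<forall>F\<in>facesK \<F> K. l2proj (face_measure F) (k - 1) (t K) (uB K))"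
  shows "dP \<K> \<F> nF b f l k ut"
proof -
  have fin: "finite \<K>" and cells: "\<forall>K\<in>\<K>. lipschitz_polytope K" and faces: "\<forall>F\<in>\<F>. lipschitz_face F"
    and cov: "\<Union>(closure ` \<K>) = closure \<Omega>" and disjF: "\<forall>F1\<in>\<F>. \<forall>F2\<in>\<F>. F1 \<noteq> F2 \<longrightarrow> F1 \<inter> F2 = {}"
    and \<Omega>p: "lipschitz_polytope \<Omega>" and finF: "finite \<F>"
    using mesh unfolding admissible_mesh_def by auto
  have fK: "\<And>K F. F \<in> facesK \<F> K \<Longrightarrow> F \<in> \<F>" by (simp add: facesK_def)
  have finfK: "\<And>K. finite (facesK \<F> K)" using finF by (simp add: facesK_def)
  have Kf: "open K" "bounded K" "K \<in> sets lebesgue" if "K \<in> \<K>" for K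
    using cell_facts[of K] cells that by auto
  have KO: "K \<subseteq> \<Omega>" if "K \<in> \<K>" for K
  proof (rule cell_in_domain[OF \<Omega>p Kf(1)[OF that]])
    have "closure K \<subseteq> closure \<Omega>" using cov that by blast
    then show "K \<subseteq> closure \<Omega>" using closure_subset by blast
  qed
  have \<Omega>l: "\<Omega> \<in> sets lebesgue" using cell_facts[OF \<Omega>p] by auto
  have cK: "complete_measure (lebesgue_on K)" if "K \<in> \<K>" for K
    using complete_measure_lebesgue_on[OF Kf(3)[OF that]] .
  have mK: "L2 (lebesgue_on K) (mnm \<alpha>)" if "K \<in> \<K>" for K and \<alpha> :: "'n \<Rightarrow> nat"
    using L2_mnm_cell[OF Kf(2,3)[OF that]] .
  have cF: "complete_measure (face_measure F)" for F :: "(real^'n) set"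
    by (rule face_measure_complete)
  have mF: "L2 (face_measure F) (mnm \<alpha>)" if "F \<in> \<F>" for F and \<alpha> :: "'n \<Rightarrow> nat"
    using L2_cont_face[OF faces[rule_format, OF that] continuous_mnm] .
  have symb: "transpose (b x) = b x" if "x \<in> \<Omega>" for x
    using data that unfolding admissible_data_def by auto
  have AEinv: "AE x in lebesgue_on K. invertible (b x) \<and> transpose (b x) = b x" if "K \<in> \<K>" for K
    by (rule AE_invertible_cell[OF data KO[OF that] Kf(3)[OF that] \<Omega>l])

  have S1: "\<forall>K\<in>\<K>. Sigma_loc \<F> b l k K (\<sigma> K)" and S3: "Lambda \<K> \<F> nF b l k uB"
    and E1: "\<forall>\<tau> q\<tau> g\<tau>. (\<forall>K\<in>\<K>. Sigma_loc \<F> b l k K (\<tau> K) \<and> weak_div K (\<tau> K) (q\<tau> K) \<and> normal_trace \<F> K (\<tau> K) (g\<tau> K)) \<longrightarrow>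
        (\<Sum>K\<in>\<K>. integral\<^sup>L (lebesgue_on K) (\<lambda>x. (matrix_inv (b x) *v \<sigma> K x) \<bullet> \<tau> K x))
        + (\<Sum>K\<in>\<K>. integral\<^sup>L (lebesgue_on K) (\<lambda>x. u K x * q\<tau> K x))
        - bpair \<K> \<F> g\<tau> uB = 0"
    and E2: "\<forall>v q\<sigma>. (\<forall>K\<in>\<K>. poly_on (lebesgue_on K) (l - 1) (v K) \<and> weak_div K (\<sigma> K) (q\<sigma> K)) \<longrightarrow>
        - (\<Sum>K\<in>\<K>. integral\<^sup>L (lebesgue_on K) (\<lambda>x. q\<sigma> K x * v K x))
        = (\<Sum>K\<in>\<K>. integral\<^sup>L (lebesgue_on K) (\<lambda>x. f x * v K x))"
    and E3: "\<forall>vB g\<sigma>. Lambda \<K> \<F> nF b l k vB \<and> (\<forall>K\<in>\<K>. normal_trace \<F> K (\<sigma> K) (g\<sigma> K)) \<longrightarrow>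
        bpair \<K> \<F> g\<sigma> vB = 0"
    using sol unfolding dHM_def by blast+

  obtain qs gs where qsgs: "\<forall>K\<in>\<K>. (weak_div K (\<sigma> K) (qs K) \<and> poly_on (lebesgue_on K) (l - 1) (qs K)) \<and>
      (normal_trace \<F> K (\<sigma> K) (gs K) \<and> (\<forall>F\<in>facesK \<F> K. poly_on (face_measure F) (k - 1) (gs K)))"
  proof -
    have "\<forall>K\<in>\<K>. \<exists>q g. (weak_div K (\<sigma> K) q \<and> poly_on (lebesgue_on K) (l - 1) q) \<and>
      (normal_trace \<F> K (\<sigma> K) g \<and> (\<forall>F\<in>facesK \<F> K. poly_on (face_measure F) (k - 1) g))"
      using S1 unfolding Sigma_loc_def by blast
    then show ?thesis using that choice2[where P="\<lambda>K q g. (weak_div K (\<sigma> K) q \<and> poly_on (lebesgue_on K) (l - 1) q) \<and>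
      (normal_trace \<F> K (\<sigma> K) g \<and> (\<forall>F\<in>facesK \<F> K. poly_on (face_measure F) (k - 1) g))"] by blast
  qed
  have qs1: "\<And>K. K \<in> \<K> \<Longrightarrow> weak_div K (\<sigma> K) (qs K)"
    and qs2: "\<And>K. K \<in> \<K> \<Longrightarrow> poly_on (lebesgue_on K) (l - 1) (qs K)"
    and gs1: "\<And>K. K \<in> \<K> \<Longrightarrow> normal_trace \<F> K (\<sigma> K) (gs K)"
    and gs2: "\<And>K F. K \<in> \<K> \<Longrightarrow> F \<in> facesK \<F> K \<Longrightarrow> poly_on (face_measure F) (k - 1) (gs K)"
    using qsgs by auto
  obtain tu where tu: "\<forall>K\<in>\<K>. is_trace \<F> K (ut K) (tu K) \<and>
                     (\<forall>F\<in>facesK \<F> K. l2proj (face_measure F) (k - 1) (tu K) (uB K))"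
    using ut_bdry by blast

  show ?thesis unfolding dP_def
  proof (intro conjI allI impI)
    show "V0 \<K> \<F> nF b l k ut" by (rule ut_V0)
    fix v gu gv w
    assume Vv: "V0 \<K> \<F> nF b l k v"
      and H: "\<forall>K\<in>\<K>. weak_grad K (ut K) (gu K) \<and> weak_grad K (v K) (gv K) \<and> l2proj (lebesgue_on K) (l - 1) (v K) (w K)"
    obtain gv' qv gnv where V: "\<forall>K\<in>\<K>. weak_grad K (v K) (gv' K) \<and>
        (weak_div K (\<lambda>x. b x *v gv' K x) (qv K) \<and> poly_on (lebesgue_on K) (l - 1) (qv K)) \<and>
        (normal_trace \<F> K (\<lambda>x. b x *v gv' K x) (gnv K) \<and> (\<forall>F\<in>facesK \<F> K. poly_on (face_measure F) (k - 1) (gnv K)))"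
    proof -
      have "\<forall>K\<in>\<K>. \<exists>gg q g. weak_grad K (v K) gg \<and>
        (weak_div K (\<lambda>x. b x *v gg x) q \<and> poly_on (lebesgue_on K) (l - 1) q) \<and>
        (normal_trace \<F> K (\<lambda>x. b x *v gg x) g \<and> (\<forall>F\<in>facesK \<F> K. poly_on (face_measure F) (k - 1) g))"
        using Vv unfolding V0_def V_loc_def by blast
      from choice3[OF this] show ?thesis using that by blast
    qed
    have Hgu: "\<And>K. K \<in> \<K> \<Longrightarrow> weak_grad K (ut K) (gu K)"
      and Hgv: "\<And>K. K \<in> \<K> \<Longrightarrow> weak_grad K (v K) (gv K)"
      and Hw: "\<And>K. K \<in> \<K> \<Longrightarrow> l2proj (lebesgue_on K) (l - 1) (v K) (w K)"
      using H by auto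
    have V1: "\<And>K. K \<in> \<K> \<Longrightarrow> weak_grad K (v K) (gv' K)"
      and V2: "\<And>K. K \<in> \<K> \<Longrightarrow> weak_div K (\<lambda>x. b x *v gv' K x) (qv K)"
      and V3: "\<And>K. K \<in> \<K> \<Longrightarrow> poly_on (lebesgue_on K) (l - 1) (qv K)"
      and V4: "\<And>K. K \<in> \<K> \<Longrightarrow> normal_trace \<F> K (\<lambda>x. b x *v gv' K x) (gnv K)"
      and V5: "\<And>K F. K \<in> \<K> \<Longrightarrow> F \<in> facesK \<F> K \<Longrightarrow> poly_on (face_measure F) (k - 1) (gnv K)"
      using V by auto
    obtain tv where tv: "\<forall>K\<in>\<K>. is_trace \<F> K (v K) (tv K)"
      using Vv unfolding V0_def jumps_vanish_def by blast
    have L2tv: "L2 (face_measure F) (tv K)" if "K \<in> \<K>" "F \<in> facesK \<F> K" for K F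
      using tv that unfolding is_trace_def by blast
    have L2tu: "L2 (face_measure F) (tu K)" if "K \<in> \<K>" "F \<in> facesK \<F> K" for K F
      using tu that unfolding is_trace_def by blast

    obtain pw where pw: "\<forall>KF\<in>Sigma \<K> (facesK \<F>). poly_fun (k - 1) (pw KF) \<and>
        l2proj (face_measure (snd KF)) (k - 1) (tv (fst KF)) (pw KF)"
    proof -
      have "\<forall>KF\<in>Sigma \<K> (facesK \<F>). \<exists>p. poly_fun (k - 1) p \<and>
        l2proj (face_measure (snd KF)) (k - 1) (tv (fst KF)) p"
      proof
        fix KF assume KF: "KF \<in> Sigma \<K> (facesK \<F>)"
        show "\<exists>p. poly_fun (k - 1) p \<and> l2proj (face_measure (snd KF)) (k - 1) (tv (fst KF)) p"
          by (rule l2proj_exists[OF mF]) (use KF fK L2tv in auto)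
      qed
      then show ?thesis using that by (metis bchoice)
    qed
    define vB where "vB K x = (\<Sum>F\<in>facesK \<F> K. indicator F x * pw (K, F) x)" for K x
    have vB_ae: "AE x in face_measure F. vB K x = pw (K, F) x" if KF: "K \<in> \<K>" "F \<in> facesK \<F> K" for K F
    proof -
      have "AE x in face_measure F. x \<in> F" using face_measure_facts(2) faces fK KF by blast
      then show ?thesis
      proof (rule AE_mp, intro AE_I2 impI)
        fix x assume xF: "x \<in> F"
        have "vB K x = (\<Sum>F'\<in>facesK \<F> K. if F' = F then pw (K, F') x else 0)" unfolding vB_def
        proof (rule sum.cong[OF refl])
          fix F' assume F': "F' \<in> facesK \<F> K"
          show "indicator F' x * pw (K, F') x = (if F' = F then pw (K, F') x else 0)"
          proof (cases "F' = F")
            case True then show ?thesis using xF by simp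
          next
            case False then have "F' \<inter> F = {}" using disjF fK F' KF(2) by blast
            then show ?thesis using xF False by (auto simp: indicator_def)
          qed
        qed
        also have "\<dots> = pw (K, F) x" using KF(2) finfK by simp
        finally show "vB K x = pw (K, F) x" .
      qed
    qed
    have vB_proj: "l2proj (face_measure F) (k - 1) (tv K) (vB K)" if KF: "K \<in> \<K>" "F \<in> facesK \<F> K" for K F
    proof -
      have pK: "poly_fun (k - 1) (pw (K, F))" "l2proj (face_measure F) (k - 1) (tv K) (pw (K, F))"
        using pw KF by auto
      show ?thesis unfolding l2proj_def
      proof (intro conjI allI impI)
        show "poly_on (face_measure F) (k - 1) (vB K)"
          unfolding poly_on_def using pK(1) vB_ae[OF KF] by blast
        fix p :: "real^'n \<Rightarrow> real" assume "poly_fun (k - 1) p"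
        then have "integral\<^sup>L (face_measure F) (\<lambda>x. (tv K x - pw (K, F) x) * p x) = 0"
          using pK(2) unfolding l2proj_def by blast
        moreover have "integral\<^sup>L (face_measure F) (\<lambda>x. (tv K x - vB K x) * p x) =
            integral\<^sup>L (face_measure F) (\<lambda>x. (tv K x - pw (K, F) x) * p x)"
          by (rule integral_cong_AE_complete[OF cF]) (use vB_ae[OF KF] in \<open>auto elim!: AE_mp\<close>)
        ultimately show "integral\<^sup>L (face_measure F) (\<lambda>x. (tv K x - vB K x) * p x) = 0" by simp
      qed
    qed
    have LvB: "Lambda \<K> \<F> nF b l k vB"
      unfolding Lambda_def
    proof (intro conjI ballI)
      show "poly_on (face_measure F) (k - 1) (vB K)" if "K \<in> \<K>" "F \<in> facesK \<F> K" for K F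
        using vB_proj[OF that] unfolding l2proj_def by blast
      show "\<exists>v t. V0 \<K> \<F> nF b l k v \<and> (\<forall>K\<in>\<K>. is_trace \<F> K (v K) (t K) \<and>
              (\<forall>F\<in>facesK \<F> K. l2proj (face_measure F) (k - 1) (t K) (vB K)))"
        by (rule exI[of _ v], rule exI[of _ tv]) (use Vv tv vB_proj in blast)
    qed
    have E3': "bpair \<K> \<F> gs vB = 0"
    proof (rule E3[rule_format, of vB gs], rule conjI[OF LvB], rule ballI)
      fix K assume "K \<in> \<K>" then show "normal_trace \<F> K (\<sigma> K) (gs K)" using qsgs by blast
    qed

    have stepA_K: "integral\<^sup>L (lebesgue_on K) (\<lambda>x. \<sigma> K x \<bullet> gv' K x) =
        (\<Sum>F\<in>facesK \<F> K. integral\<^sup>L (face_measure F) (\<lambda>x. gs K x * vB K x))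
        - integral\<^sup>L (lebesgue_on K) (\<lambda>x. qs K x * w K x)" if K: "K \<in> \<K>" for K
    proof -
      have nt: "normal_trace \<F> K (\<sigma> K) (gs K)" using qsgs K by blast
      have "\<forall>q \<phi> g\<phi> t. weak_div K (\<sigma> K) q \<longrightarrow> weak_grad K \<phi> g\<phi> \<longrightarrow> is_trace \<F> K \<phi> t \<longrightarrow>
        integral\<^sup>L (lebesgue_on K) (\<lambda>x. \<sigma> K x \<bullet> g\<phi> x) + integral\<^sup>L (lebesgue_on K) (\<lambda>x. q x * \<phi> x)
        = (\<Sum>F\<in>facesK \<F> K. integral\<^sup>L (face_measure F) (\<lambda>x. gs K x * t x))"
        using nt unfolding normal_trace_def by (elim conjE)
      from this[rule_format, of "qs K" "v K" "gv' K" "tv K"]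
      have green: "integral\<^sup>L (lebesgue_on K) (\<lambda>x. \<sigma> K x \<bullet> gv' K x) + integral\<^sup>L (lebesgue_on K) (\<lambda>x. qs K x * v K x)
          = (\<Sum>F\<in>facesK \<F> K. integral\<^sup>L (face_measure F) (\<lambda>x. gs K x * tv K x))"
        using qs1[OF K] V1[OF K] tv K by blast
      have faceA: "integral\<^sup>L (face_measure F) (\<lambda>x. gs K x * tv K x) = integral\<^sup>L (face_measure F) (\<lambda>x. gs K x * vB K x)"
        if F: "F \<in> facesK \<F> K" for F
        by (rule proj_pair[OF cF mF[OF fK[OF F]] vB_proj[OF K F] L2tv[OF K F] gs2[OF K F]])
      have L2v: "L2 (lebesgue_on K) (v K)" using Hgv[OF K] unfolding weak_grad_def by blast
      have cellA: "integral\<^sup>L (lebesgue_on K) (\<lambda>x. qs K x * v K x) = integral\<^sup>L (lebesgue_on K) (\<lambda>x. qs K x * w K x)"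
        by (rule proj_pair[OF cK[OF K] mK[OF K] Hw[OF K] L2v qs2[OF K]])
      have "(\<Sum>F\<in>facesK \<F> K. integral\<^sup>L (face_measure F) (\<lambda>x. gs K x * tv K x)) =
          (\<Sum>F\<in>facesK \<F> K. integral\<^sup>L (face_measure F) (\<lambda>x. gs K x * vB K x))"
        by (rule sum.cong[OF refl]) (rule faceA)
      then show ?thesis using green cellA by linarith
    qed
    have polyw: "\<forall>K\<in>\<K>. poly_on (lebesgue_on K) (l - 1) (w K) \<and> weak_div K (\<sigma> K) (qs K)"
      using Hw qs1 unfolding l2proj_def by blast
    have E2': "- (\<Sum>K\<in>\<K>. integral\<^sup>L (lebesgue_on K) (\<lambda>x. qs K x * w K x))
        = (\<Sum>K\<in>\<K>. integral\<^sup>L (lebesgue_on K) (\<lambda>x. f x * w K x))"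
      using E2[rule_format, of w qs] polyw by blast
    have stepA: "(\<Sum>K\<in>\<K>. integral\<^sup>L (lebesgue_on K) (\<lambda>x. \<sigma> K x \<bullet> gv' K x)) =
        (\<Sum>K\<in>\<K>. integral\<^sup>L (lebesgue_on K) (\<lambda>x. f x * w K x))"
    proof -
      have "(\<Sum>K\<in>\<K>. integral\<^sup>L (lebesgue_on K) (\<lambda>x. \<sigma> K x \<bullet> gv' K x)) =
          bpair \<K> \<F> gs vB - (\<Sum>K\<in>\<K>. integral\<^sup>L (lebesgue_on K) (\<lambda>x. qs K x * w K x))"
        unfolding bpair_def by (simp add: stepA_K sum_subtractf)
      then show ?thesis using E3' E2' by simp
    qed

    define \<tau> where "\<tau> K x = b x *v gv' K x" for K x
    have S\<tau>: "\<forall>K\<in>\<K>. Sigma_loc \<F> b l k K (\<tau> K) \<and> weak_div K (\<tau> K) (qv K) \<and> normal_trace \<F> K (\<tau> K) (gnv K)"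
    proof
      fix K assume K: "K \<in> \<K>"
      have cf: "curl_free K (\<lambda>x. matrix_inv (b x) *v \<tau> K x)"
      proof (rule curl_free_grad[OF _ _ ])
        show "lipschitz_polytope K" using cells K by blast
        show "weak_grad K (v K) (gv' K)" using V1[OF K] .
        show "AE x in lebesgue_on K. matrix_inv (b x) *v \<tau> K x = gv' K x"
          using AEinv[OF K] by (rule AE_mp) (auto simp: \<tau>_def inv_mult_cancel)
      qed
      show "Sigma_loc \<F> b l k K (\<tau> K) \<and> weak_div K (\<tau> K) (qv K) \<and> normal_trace \<F> K (\<tau> K) (gnv K)"
        unfolding Sigma_loc_def using cf V2[OF K] V3[OF K] V4[OF K] V5[OF K] unfolding \<tau>_def by blast
    qed
    have E1': "(\<Sum>K\<in>\<K>. integral\<^sup>L (lebesgue_on K) (\<lambda>x. (matrix_inv (b x) *v \<sigma> K x) \<bullet> \<tau> K x))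
        + (\<Sum>K\<in>\<K>. integral\<^sup>L (lebesgue_on K) (\<lambda>x. u K x * qv K x))
        - bpair \<K> \<F> gnv uB = 0"
      using E1[rule_format, of \<tau> qv gnv] S\<tau> by blast
    have stepB_K: "integral\<^sup>L (lebesgue_on K) (\<lambda>x. (matrix_inv (b x) *v \<sigma> K x) \<bullet> \<tau> K x)
        + integral\<^sup>L (lebesgue_on K) (\<lambda>x. u K x * qv K x)
        - (\<Sum>F\<in>facesK \<F> K. integral\<^sup>L (face_measure F) (\<lambda>x. gnv K x * uB K x))
        = integral\<^sup>L (lebesgue_on K) (\<lambda>x. \<sigma> K x \<bullet> gv' K x) - integral\<^sup>L (lebesgue_on K) (\<lambda>x. \<tau> K x \<bullet> gu K x)"
      if K: "K \<in> \<K>" for K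
    proof -
      have i: "integral\<^sup>L (lebesgue_on K) (\<lambda>x. (matrix_inv (b x) *v \<sigma> K x) \<bullet> \<tau> K x) =
          integral\<^sup>L (lebesgue_on K) (\<lambda>x. \<sigma> K x \<bullet> gv' K x)"
        by (rule integral_cong_AE_complete[OF cK[OF K]], rule AE_mp[OF AEinv[OF K]])
           (auto simp: \<tau>_def sym_inv_inner)
      have L2ut: "L2 (lebesgue_on K) (ut K)" using Hgu[OF K] unfolding weak_grad_def by blast
      have ii: "integral\<^sup>L (lebesgue_on K) (\<lambda>x. qv K x * ut K x) = integral\<^sup>L (lebesgue_on K) (\<lambda>x. qv K x * u K x)"
        by (rule proj_pair[OF cK[OF K] mK[OF K] _ L2ut V3[OF K]]) (use ut_cell K in blast)
      have iii: "integral\<^sup>L (face_measure F) (\<lambda>x. gnv K x * tu K x) = integral\<^sup>L (face_measure F) (\<lambda>x. gnv K x * uB K x)"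
        if F: "F \<in> facesK \<F> K" for F
        by (rule proj_pair[OF cF mF[OF fK[OF F]] _ L2tu[OF K F] V5[OF K F]]) (use tu K F in blast)
      have nt: "normal_trace \<F> K (\<tau> K) (gnv K)" using S\<tau> K by blast
      have "\<forall>q \<phi> g\<phi> t. weak_div K (\<tau> K) q \<longrightarrow> weak_grad K \<phi> g\<phi> \<longrightarrow> is_trace \<F> K \<phi> t \<longrightarrow>
        integral\<^sup>L (lebesgue_on K) (\<lambda>x. \<tau> K x \<bullet> g\<phi> x) + integral\<^sup>L (lebesgue_on K) (\<lambda>x. q x * \<phi> x)
        = (\<Sum>F\<in>facesK \<F> K. integral\<^sup>L (face_measure F) (\<lambda>x. gnv K x * t x))"
        using nt unfolding normal_trace_def by (elim conjE)
      from this[rule_format, of "qv K" "ut K" "gu K" "tu K"]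
      have iv: "integral\<^sup>L (lebesgue_on K) (\<lambda>x. \<tau> K x \<bullet> gu K x) + integral\<^sup>L (lebesgue_on K) (\<lambda>x. qv K x * ut K x)
          = (\<Sum>F\<in>facesK \<F> K. integral\<^sup>L (face_measure F) (\<lambda>x. gnv K x * tu K x))"
        using V2[OF K] Hgu[OF K] tu K unfolding \<tau>_def by blast
      have "(\<Sum>F\<in>facesK \<F> K. integral\<^sup>L (face_measure F) (\<lambda>x. gnv K x * uB K x)) =
          (\<Sum>F\<in>facesK \<F> K. integral\<^sup>L (face_measure F) (\<lambda>x. gnv K x * tu K x))"
        by (rule sum.cong[OF refl]) (rule iii[symmetric])
      moreover have "integral\<^sup>L (lebesgue_on K) (\<lambda>x. u K x * qv K x) = integral\<^sup>L (lebesgue_on K) (\<lambda>x. qv K x * ut K x)"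
        using ii by (simp add: mult.commute)
      ultimately show ?thesis using i iv by linarith
    qed
    have stepB: "(\<Sum>K\<in>\<K>. integral\<^sup>L (lebesgue_on K) (\<lambda>x. \<sigma> K x \<bullet> gv' K x)) =
        (\<Sum>K\<in>\<K>. integral\<^sup>L (lebesgue_on K) (\<lambda>x. \<tau> K x \<bullet> gu K x))"
    proof -
      have "0 = (\<Sum>K\<in>\<K>. integral\<^sup>L (lebesgue_on K) (\<lambda>x. \<sigma> K x \<bullet> gv' K x) - integral\<^sup>L (lebesgue_on K) (\<lambda>x. \<tau> K x \<bullet> gu K x))"
        using E1' unfolding bpair_def by (simp add: stepB_K[symmetric] sum_subtractf sum.distrib)
      then show ?thesis by (simp add: sum_subtractf)
    qed

    have fin_K: "integral\<^sup>L (lebesgue_on K) (\<lambda>x. (b x *v gu K x) \<bullet> gv K x) =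
        integral\<^sup>L (lebesgue_on K) (\<lambda>x. \<tau> K x \<bullet> gu K x)" if K: "K \<in> \<K>" for K
    proof -
      have "integral\<^sup>L (lebesgue_on K) (\<lambda>x. (b x *v gu K x) \<bullet> gv K x) =
          integral\<^sup>L (lebesgue_on K) (\<lambda>x. (b x *v gv K x) \<bullet> gu K x)"
      proof (rule Bochner_Integration.integral_cong[OF refl])
        fix x assume "x \<in> space (lebesgue_on K)"
        then have "x \<in> \<Omega>" using KO[OF K] by (auto simp: space_restrict_space)
        then show "(b x *v gu K x) \<bullet> gv K x = (b x *v gv K x) \<bullet> gu K x" using sym_inner[OF symb] by blast
      qed
      also have "\<dots> = integral\<^sup>L (lebesgue_on K) (\<lambda>x. \<tau> K x \<bullet> gu K x)"
      proof (rule integral_cong_AE_complete[OF cK[OF K]])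
        have "AE x in lebesgue_on K. gv K x = gv' K x"
          by (rule weak_grad_unique[OF _ Hgv[OF K] V1[OF K]]) (use cells K in blast)
        then show "AE x in lebesgue_on K. (b x *v gv K x) \<bullet> gu K x = \<tau> K x \<bullet> gu K x"
          by (rule AE_mp) (auto simp: \<tau>_def)
      qed
      finally show ?thesis .
    qed
    show "(\<Sum>K\<in>\<K>. integral\<^sup>L (lebesgue_on K) (\<lambda>x. (b x *v gu K x) \<bullet> gv K x)) =
        (\<Sum>K\<in>\<K>. integral\<^sup>L (lebesgue_on K) (\<lambda>x. f x * w K x))"
      using fin_K stepA stepB by simp
  qed
qed

end
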